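(* In the neutral case $\gamma=0$, for $\theta>0$, $m\ge2$ and $t\ge0$, \[ \lim_{N\to\infty}N\theta\,\mathbb E^0_{1/N}\Big[\int_0^{t}\big(1-\xi_u^m-(1-\xi_u)^m\big)du\Big]=\theta\int_0^t\big(\mathbb E^0_m(A_u)-\mathbb P^0_m(A_u=1)\big)du=\theta\sum_{k=2}^m\big(1+(-1)^k\big)\big(1-e^{-\binom k2 t}\big)\frac{2k-1}{\binom k2}\frac{m_{[k]}}{m_{(k)}}, \] where $m_{[k]}=\Gamma(m+1)/\Gamma(m-k+1)$ and $m_{(k)}=\Gamma(m+k)/\Gamma(m)$.
   Context: $(\xi_t)$ under $\mathbb P^0_x,\mathbb E^0_x$ is the neutral Wright–Fisher diffusion $d\xi_t=\sqrt{\xi_t(1-\xi_t)}\,dW_t$ on $[0,1]$ started at $x$, absorbed at $0$ and $1$. $(A_t)$ under $\mathbb P^0_m,\mathbb E^0_m$ is Kingman's coalescent started at $A_0=m$: the pure death process on $\{1,2,\dots\}$ jumping from $k$ to $k-1$ at rate $\binom k2$. *)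

theory Defs
  imports "HOL-Probability.Probability"
begin

definition natural_events :: "'a measure \<Rightarrow> (real \<Rightarrow> 'a \<Rightarrow> real) \<Rightarrow> real \<Rightarrow> 'a set set" where
  "natural_events M X s =
     sigma_sets (space M) (\<Union>r\<in>{0..s}. {X r -` A \<inter> space M | A. A \<in> sets borel})"

text \<open>X under M is a neutral Wright-Fisher diffusion dxi = sqrt(xi(1-xi)) dW on [0,1]
  started at x: continuous [0,1]-valued paths, X 0 = x, solving the martingale problem
  for the generator (1/2) y (1-y) f''(y) for all C^2 functions f, with respect to the
  natural filtration. (Absorption at 0 and 1 is automatic.)\<close>
definition is_neutral_WF :: "'a measure \<Rightarrow> (real \<Rightarrow> 'a \<Rightarrow> real) \<Rightarrow> real \<Rightarrow> bool" where
  "is_neutral_WF M X x \<longleftrightarrow>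
     prob_space M \<and>
     (\<forall>t\<ge>0. X t \<in> borel_measurable M) \<and>
     (\<forall>\<omega>\<in>space M. X 0 \<omega> = x \<and> continuous_on {0..} (\<lambda>t. X t \<omega>) \<and>
        (\<forall>t\<ge>0. X t \<omega> \<in> {0..1})) \<and>
     (\<forall>f f' f''. (\<forall>y. (f has_real_derivative f' y) (at y)) \<and>
                (\<forall>y. (f' has_real_derivative f'' y) (at y)) \<and> continuous_on UNIV f'' \<longrightarrow>
        (\<forall>s t. 0 \<le> s \<and> s \<le> t \<longrightarrow>
          (\<forall>B\<in>natural_events M X s.
             integral\<^sup>L M (\<lambda>\<omega>. indicator B \<omega> *
               (f (X t \<omega>) - f (X s \<omega>) -
                (LBINT u=s..t. X u \<omega> * (1 - X u \<omega>) / 2 * f'' (X u \<omega>)))) = 0)))"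

definition kingman_times :: "'b measure \<Rightarrow> (nat \<Rightarrow> 'b \<Rightarrow> real) \<Rightarrow> nat \<Rightarrow> bool" where
  "kingman_times M T m \<longleftrightarrow>
     prob_space M \<and> prob_space.indep_vars M (\<lambda>_. borel) T {2..m} \<and>
     (\<forall>k\<in>{2..m}. distributed M lborel (T k) (exponential_density (real (k choose 2))))"

text \<open>The state A_u of the pure death process built from the holding times:
  A_u = k iff T(k+1)+...+T(m) \<le> u < T(k)+...+T(m) (right-continuous paths).\<close>
definition kingman_state :: "nat \<Rightarrow> (nat \<Rightarrow> 'b \<Rightarrow> real) \<Rightarrow> real \<Rightarrow> 'b \<Rightarrow> nat" where
  "kingman_state m T u \<omega> = (LEAST k. 1 \<le> k \<and> (\<Sum>j\<in>{k<..m}. T j \<omega>) \<le> u)"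

end

theory Submission
  imports Defs
begin



definition lam :: "nat \<Rightarrow> real" where "lam k = real (k choose 2)"

lemma lam_eq: "lam k = real k * (real k - 1) / 2"
proof (induction k)
  case 0 then show ?case by (simp add: lam_def)
next
  case (Suc k)
  have "Suc k choose 2 = k + (k choose 2)"
    by (simp add: numeral_2_eq_2)
  then show ?case using Suc by (simp add: lam_def field_simps)
qed

lemma lam_1 [simp]: "lam 1 = 0" by (simp add: lam_def)
lemma lam_Suc0 [simp]: "lam (Suc 0) = 0" by (simp add: lam_def)

fun rr :: "nat \<Rightarrow> real \<Rightarrow> real" where
  "rr 0 k = 1"
| "rr (Suc j) k = rr j k * (k - real j) / (k + real j)"

lemma rr_zero: "k < j \<Longrightarrow> rr j (real k) = 0"
proof (induction j)
  case 0 then show ?case by simp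
next
  case (Suc j)
  then show ?case by (cases "k = j") (auto simp: rr.simps)
qed

lemma rr_Suc2: "rr (Suc j) k = rr j k * (k - real j) / (k + real j)" by simp
declare rr.simps(2)[simp del]

lemma rr_rec2:
  assumes "1 \<le> k"
  shows "(real k - real j) * (real k + real j - 1) * rr j (real k)
       = real k * (real k - 1) * rr j (real k - 1)"
proof (induction j)
  case 0 then show ?case by simp
next
  case (Suc j)
  show ?case
  proof (cases "k = 1 \<and> j = 0")
    case True then show ?thesis by (simp add: rr_Suc2)
  next
    case False
    then have nz: "real k - 1 + real j \<noteq> 0" using assms by auto
    have nz2: "real k + real j \<noteq> 0" using assms by auto
    obtain a b where a: "a = rr j (real k)" and b: "b = rr j (real k - 1)" by blast
    have IH: "(real k - real j) * (real k + real j - 1) * a = real k * (real k - 1) * b"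
      using Suc a b by simp
    have "(real k - real (Suc j)) * (real k + real (Suc j) - 1) * rr (Suc j) (real k)
        = (real k - real j - 1) * ((real k - real j) * a)"
      using nz2 by (simp add: rr_Suc2 a field_simps)
    also have "\<dots> = (real k - real j - 1) / (real k - 1 + real j) *
         ((real k - real j) * (real k + real j - 1) * a)"
      using nz by (simp add: field_simps)
    also have "\<dots> = (real k - real j - 1) / (real k - 1 + real j) * (real k * (real k - 1) * b)"
      using IH by simp
    also have "\<dots> = real k * (real k - 1) * rr (Suc j) (real k - 1)"
      using nz by (simp add: rr_Suc2 b field_simps)
    finally show ?thesis .
  qed
qed

lemma S1_partial:
  assumes "1 \<le> k"
  shows "(\<Sum>j=1..n. (2 * real j - 1) * rr j (real k))
         = real k - rr (Suc n) (real k) * (real k + real n)"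
proof (induction n)
  case 0 then show ?case by (simp add: rr_Suc2)
next
  case (Suc n)
  have nz: "real k + real n + 1 \<noteq> 0" using assms by auto
  obtain r where r: "r = rr (Suc n) (real k)" by blast
  have "(\<Sum>j=1..Suc n. (2 * real j - 1) * rr j (real k))
     = real k - r * (real k + real n) + (2 * real (Suc n) - 1) * r"
    using Suc r by (simp add: sum.cl_ivl_Suc)
  also have "\<dots> = real k - r * (real k - real (Suc n)) / (real k + real (Suc n)) * (real k + real (Suc n))"
    using nz by (simp add: field_simps)
  also have "\<dots> = real k - rr (Suc (Suc n)) (real k) * (real k + real (Suc n))"
    by (simp add: rr_Suc2 r)
  finally show ?case .
qed

lemma S2_partial:
  assumes "2 \<le> k"
  shows "(\<Sum>j=1..n. (-1)^(j-1) * (2 * real j - 1) * rr j (real k))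
         = - ((-1)^n * real n * (real k + real n) / (real k - 1) * rr (Suc n) (real k))"
proof (induction n)
  case 0 then show ?case by simp
next
  case (Suc n)
  have nz: "real k + real n + 1 \<noteq> 0" "real k - 1 \<noteq> 0" using assms by auto
  obtain r where r: "r = rr (Suc n) (real k)" by blast
  obtain s :: real where s: "s = (-1)^n" by blast
  have "(\<Sum>j=1..Suc n. (-1)^(j-1) * (2 * real j - 1) * rr j (real k))
     = - (s * real n * (real k + real n) / (real k - 1) * r) + s * (2 * real (Suc n) - 1) * r"
    using Suc r s by (simp add: sum.cl_ivl_Suc)
  also have "\<dots> = - ((- s) * real (Suc n) * (real k + real (Suc n)) / (real k - 1) *
          (r * (real k - real (Suc n)) / (real k + real (Suc n))))"
  proof -
    have e1: "- (s * real n * (real k + real n) / (real k - 1) * r) + s * (2 * real (Suc n) - 1) * r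
       = s * r * (- real n * (real k + real n) + (2 * real n + 1) * (real k - 1)) / (real k - 1)"
      using nz by (simp add: field_simps)
    have e2: "- ((- s) * real (Suc n) * (real k + real (Suc n)) / (real k - 1) *
          (r * (real k - real (Suc n)) / (real k + real (Suc n))))
       = s * r * ((real n + 1) * (real k - real n - 1)) / (real k - 1)"
    proof -
      obtain c where c: "c = real k + real (Suc n)" by blast
      obtain d where d: "d = real k - 1" by blast
      have "c \<noteq> 0" "d \<noteq> 0" using nz c d by auto
      then have "- ((- s) * real (Suc n) * c / d * (r * (real k - real (Suc n)) / c))
       = s * r * ((real n + 1) * (real k - real n - 1)) / d"
        by (simp add: field_simps)
      then show ?thesis using c d by simp
    qed
    have e3: "- real n * (real k + real n) + (2 * real n + 1) * (real k - 1) = (real n + 1) * (real k - real n - 1)"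
      by (simp add: algebra_simps)
    show ?thesis unfolding e1 e2 e3 by (simp add: algebra_simps)
  qed
  also have "\<dots> = - ((-1)^(Suc n) * real (Suc n) * (real k + real (Suc n)) / (real k - 1) * rr (Suc (Suc n)) (real k))"
    by (simp add: rr_Suc2 r s)
  finally show ?case .
qed


definition cc :: "nat \<Rightarrow> real \<Rightarrow> real" where
  "cc j k = (1 + (-1)^j) * (2 * real j - 1) * rr j k"

lemma H0_sum:
  assumes "1 \<le> k" "k \<le> m"
  shows "(\<Sum>j=2..m. cc j (real k)) = real k - (if k = 1 then 1 else 0)"
proof (cases "k = 1")
  case True
  have "cc j (real k) = 0" if "j \<in> {2..m}" for j
    using that True rr_zero[of k j] by (simp add: cc_def)
  then show ?thesis using True by simp
next
  case False
  then have k2: "2 \<le> k" using assms by simp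
  have z: "rr (Suc m) (real k) = 0" using rr_zero[of k "Suc m"] assms by simp
  have "(\<Sum>j=2..m. cc j (real k)) = (\<Sum>j=1..m. cc j (real k))"
  proof -
    have "(\<Sum>j=1..m. cc j (real k)) = cc 1 (real k) + (\<Sum>j=Suc 1..m. cc j (real k))"
      using assms by (intro sum.atLeast_Suc_atMost) simp
    then show ?thesis by (simp add: cc_def numeral_2_eq_2)
  qed
  also have "\<dots> = (\<Sum>j=1..m. (2 * real j - 1) * rr j (real k))
                 - (\<Sum>j=1..m. (-1)^(j-1) * (2 * real j - 1) * rr j (real k))"
  proof -
    have "cc j (real k) = (2 * real j - 1) * rr j (real k) - (-1)^(j-1) * (2 * real j - 1) * rr j (real k)"
      if "j \<in> {1..m}" for j
    proof -
      have "(-1::real)^j = - ((-1)^(j-1))" using that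
        by (metis One_nat_def Suc_diff_1 atLeastAtMost_iff less_le_trans mult_minus1 power_Suc zero_less_one)
      then show ?thesis by (simp add: cc_def algebra_simps)
    qed
    then show ?thesis by (simp add: sum_subtractf)
  qed
  also have "\<dots> = real k"
    using S1_partial[of k m] S2_partial[OF k2, of m] z assms by simp
  finally show ?thesis using False by simp
qed

lemma cc_rec:
  assumes "1 \<le> k"
  shows "(lam k - lam j) * cc j (real k) = lam k * cc j (real (k - 1))"
proof -
  have "real (k - 1) = real k - 1" using assms by simp
  moreover have "lam k - lam j = (real k - real j) * (real k + real j - 1) / 2"
    by (simp add: lam_eq field_simps)
  ultimately show ?thesis using rr_rec2[OF assms, of j]
    by (simp add: cc_def lam_eq) (simp add: field_simps)
qed

lemma duality:
  fixes G \<mu> :: "nat \<Rightarrow> real \<Rightarrow> real"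
  assumes t: "0 \<le> t" and m: "1 \<le> m"
  and Gm: "\<forall>u\<in>{0..t}. G m u = 0"
  and G0: "\<forall>k\<in>{1..<m}. G k 0 = 1"
  and dG: "\<forall>k\<in>{1..<m}. \<forall>u\<in>{0..t}. (G k has_real_derivative (- lam (Suc k) * (G k u - G (Suc k) u))) (at u within {0..t})"
  and dmu: "\<forall>k\<in>{1..m}. \<forall>u\<in>{0..t}. (\<mu> k has_real_derivative (lam k * (\<mu> (k-1) u - \<mu> k u))) (at u within {0..t})"
  shows "\<mu> m t = \<mu> 1 0 + (\<Sum>k=1..<m. G k t * (\<mu> (Suc k) 0 - \<mu> k 0))"
proof -
  define F where "F s = \<mu> 1 s + (\<Sum>k=1..<m. G k (t - s) * (\<mu> (Suc k) s - \<mu> k s))" for s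
  have img: "(\<lambda>s. t - s) ` {0..t} = {0..t}"
  proof
    show "(\<lambda>s. t - s) ` {0..t} \<subseteq> {0..t}" by auto
    show "{0..t} \<subseteq> (\<lambda>s. t - s) ` {0..t}"
    proof
      fix x assume "x \<in> {0..t}" then show "x \<in> (\<lambda>s. t - s) ` {0..t}"
        by (intro image_eqI[of _ _ "t - x"]) auto
    qed
  qed
  have dF: "(F has_real_derivative 0) (at s within {0..t})" if s: "s \<in> {0..t}" for s
  proof -
    have ts: "t - s \<in> {0..t}" using s by auto
    have dGs: "((\<lambda>s. G k (t - s)) has_real_derivative
                 (- lam (Suc k) * (G k (t - s) - G (Suc k) (t - s))) * (-1)) (at s within {0..t})"
      if k: "k \<in> {1..<m}" for k
    proof -
      have "(G k has_real_derivative (- lam (Suc k) * (G k (t - s) - G (Suc k) (t - s))))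
              (at (t - s) within {0..t})"
        using dG k ts by blast
      then have "(G k has_real_derivative (- lam (Suc k) * (G k (t - s) - G (Suc k) (t - s))))
              (at ((\<lambda>s. t - s) s) within (\<lambda>s. t - s) ` {0..t})"
        by (simp only: img)
      moreover have "((\<lambda>s. t - s) has_real_derivative -1) (at s within {0..t})"
        by (auto intro!: derivative_eq_intros)
      ultimately show ?thesis using DERIV_image_chain[of "G k" _ "\<lambda>s. t - s" s "{0..t}" "-1"]
        by (simp only: comp_def mult_minus1_right)
    qed
    let ?d = "\<lambda>k. \<mu> (Suc k) s - \<mu> k s"
    let ?D = "\<lambda>k. lam (Suc k) * (G k (t - s) - G (Suc k) (t - s)) * ?d k
              + G k (t - s) * (lam (Suc k) * (\<mu> k s - \<mu> (Suc k) s) - lam k * (\<mu> (k-1) s - \<mu> k s))"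
    have d1: "(\<mu> 1 has_real_derivative 0) (at s within {0..t})"
    proof -
      have "1 \<in> {1..m}" using m by simp
      then have "(\<mu> 1 has_real_derivative (lam 1 * (\<mu> (1-1) s - \<mu> 1 s))) (at s within {0..t})"
        using dmu s by blast
      then show ?thesis by simp
    qed
    have dS: "((\<lambda>s. \<Sum>k=1..<m. G k (t - s) * (\<mu> (Suc k) s - \<mu> k s)) has_real_derivative
               (\<Sum>k=1..<m. ?D k)) (at s within {0..t})"
    proof (rule DERIV_sum)
      fix k assume k: "k \<in> {1..<m}"
      have a: "(\<mu> (Suc k) has_real_derivative (lam (Suc k) * (\<mu> k s - \<mu> (Suc k) s))) (at s within {0..t})"
      proof -
        have "Suc k \<in> {1..m}" using k by simp
        then have "(\<mu> (Suc k) has_real_derivative (lam (Suc k) * (\<mu> (Suc k - 1) s - \<mu> (Suc k) s))) (at s within {0..t})"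
          using dmu s by blast
        then show ?thesis by simp
      qed
      have b: "(\<mu> k has_real_derivative (lam k * (\<mu> (k-1) s - \<mu> k s))) (at s within {0..t})"
      proof -
        have "k \<in> {1..m}" using k by simp
        then show ?thesis using dmu s by blast
      qed
      show "((\<lambda>s. G k (t - s) * (\<mu> (Suc k) s - \<mu> k s)) has_real_derivative ?D k) (at s within {0..t})"
        using DERIV_mult[OF dGs[OF k] DERIV_diff[OF a b]] by (simp add: algebra_simps)
    qed
    have tel: "(\<Sum>k=1..<m. ?D k) = 0"
    proof -
      let ?b = "\<lambda>k. lam k * G k (t - s) * (\<mu> k s - \<mu> (k-1) s)"
      have "?D k = ?b k - ?b (Suc k)" for k
        by (simp add: algebra_simps)
      then have "(\<Sum>k=1..<m. ?D k) = (\<Sum>k=1..<m. ?b k - ?b (Suc k))" by simp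
      also have "\<dots> = - (\<Sum>k=1..<m. ?b (Suc k) - ?b k)"
        by (simp add: sum_negf[symmetric])
      also have "\<dots> = ?b 1 - ?b m"
        using sum_Suc_diff'[of 1 m ?b] m by simp
      also have "\<dots> = 0" using Gm ts by simp
      finally show ?thesis .
    qed
    show ?thesis unfolding F_def using DERIV_add[OF d1 dS] tel by simp
  qed
  obtain c where c: "\<forall>x\<in>{0..t}. F x = c"
    using has_field_derivative_zero_constant[of "{0..t}" F] dF by blast
  have "F t = F 0" using c t by auto
  moreover have "F t = \<mu> m t"
  proof -
    have "F t = \<mu> 1 t + (\<Sum>k=1..<m. \<mu> (Suc k) t - \<mu> k t)"
      unfolding F_def using G0 by simp
    also have "\<dots> = \<mu> m t" using sum_Suc_diff'[of 1 m "\<lambda>k. \<mu> k t"] m by simp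
    finally show ?thesis .
  qed
  ultimately show ?thesis unfolding F_def by simp
qed


definition HH :: "nat \<Rightarrow> nat \<Rightarrow> real \<Rightarrow> real" where
  "HH m k s = (\<Sum>j=2..m. cc j (real k) * exp (- lam j * s))"

lemma HH_deriv:
  assumes "1 \<le> k"
  shows "(HH m k has_real_derivative lam k * (HH m (k-1) s - HH m k s)) (at s within S)"
proof -
  have "(HH m k has_real_derivative (\<Sum>j=2..m. cc j (real k) * (exp (- lam j * s) * (- lam j)))) (at s within S)"
    unfolding HH_def by (auto intro!: derivative_eq_intros sum.cong simp: algebra_simps)
  moreover have "(\<Sum>j=2..m. cc j (real k) * (exp (- lam j * s) * (- lam j)))
     = lam k * (HH m (k-1) s - HH m k s)"
  proof -
    have "cc j (real k) * (exp (- lam j * s) * (- lam j))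
          = lam k * (cc j (real (k-1)) * exp (- lam j * s)) - lam k * (cc j (real k) * exp (- lam j * s))" for j
    proof -
      have "lam k * cc j (real k) * exp (- lam j * s) = (lam j * cc j (real k) + lam k * cc j (real (k-1))) * exp (- lam j * s)"
        using cc_rec[OF assms, of j] by (simp add: algebra_simps)
      then show ?thesis by (simp add: algebra_simps)
    qed
    then show ?thesis unfolding HH_def
      by (simp add: sum_subtractf sum_distrib_left right_diff_distrib)
  qed
  ultimately show ?thesis by simp
qed

lemma HH_0:
  assumes "1 \<le> k" "k \<le> m"
  shows "HH m k 0 = real k - (if k = 1 then 1 else 0)"
  using H0_sum[OF assms] by (simp add: HH_def)

lemma lam_pos: "2 \<le> j \<Longrightarrow> lam j > 0"
  by (simp add: lam_def)

lemma lam_nz: "2 \<le> j \<Longrightarrow> lam j \<noteq> 0"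
  using lam_pos[of j] by linarith

lemma HH_integral:
  assumes "0 \<le> t"
  shows "(LBINT u=0..t. HH m m u) = (\<Sum>j=2..m. cc j (real m) * (1 - exp (- lam j * t)) / lam j)"
proof -
  define F where "F u = (\<Sum>j=2..m. cc j (real m) / lam j * (- exp (- lam j * u)))" for u
  have "(LBINT u=0..t. HH m m u) = F t - F 0"
    unfolding zero_ereal_def
  proof (rule interval_integral_FTC_finite)
    show "continuous_on {min 0 t..max 0 t} (HH m m)"
      unfolding HH_def by (intro continuous_intros)
    fix x
    have "(F has_real_derivative HH m m x) (at x within {min 0 t..max 0 t})"
      unfolding F_def HH_def by (auto intro!: derivative_eq_intros sum.cong simp: lam_nz)
    then show "(F has_vector_derivative HH m m x) (at x within {min 0 t..max 0 t})"
      by (simp add: has_real_derivative_iff_has_vector_derivative)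
  qed
  also have "\<dots> = (\<Sum>j=2..m. cc j (real m) * (1 - exp (- lam j * t)) / lam j)"
    unfolding F_def by (auto simp: sum_subtractf[symmetric] intro!: sum.cong simp: field_simps lam_nz)
  finally show ?thesis .
qed

lemma ratio_aux:
  fixes a b A B C D :: real
  assumes "a \<noteq> 0" "b \<noteq> 0" "B \<noteq> 0" "C \<noteq> 0" "D \<noteq> 0"
  shows "A / (a * B) / (C / D) * a / b = A / B / ((b * C) / D)"
  using assms by (simp add: field_simps)

lemma Gamma_ratio:
  assumes "j \<le> m" "1 \<le> m"
  shows "Gamma (real m + 1) / Gamma (real m - real j + 1) / (Gamma (real m + real j) / Gamma (real m))
         = rr j (real m)"
  using assms(1)
proof (induction j)
  case 0
  have "real m + 1 > 0" "real m > 0" using assms by auto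
  then have "Gamma (real m + 1) > 0" "Gamma (real m) > 0" using Gamma_real_pos by blast+
  then have "Gamma (real m + 1) \<noteq> 0" "Gamma (real m) \<noteq> 0" by linarith+
  then show ?case by simp
next
  case (Suc j)
  have p1: "Gamma (real m - real j + 1) = (real m - real j) * Gamma (real m - real (Suc j) + 1)"
  proof -
    have "real m - real (Suc j) + 1 > 0" using Suc.prems by simp
    then have "real m - real (Suc j) + 1 \<notin> \<int>\<^sub>\<le>\<^sub>0" by (auto dest: nonpos_Ints_nonpos)
    then show ?thesis using Gamma_plus1[of "real m - real (Suc j) + 1"] by (simp add: algebra_simps)
  qed
  have p2: "Gamma (real m + real (Suc j)) = (real m + real j) * Gamma (real m + real j)"
  proof -
    have "real m + real j > 0" using assms by simp
    then have "real m + real j \<notin> \<int>\<^sub>\<le>\<^sub>0" by (auto dest: nonpos_Ints_nonpos)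
    then show ?thesis using Gamma_plus1[of "real m + real j"] by (simp add: algebra_simps)
  qed
  have nz: "Gamma (real m - real (Suc j) + 1) \<noteq> 0" "Gamma (real m + real j) \<noteq> 0" "Gamma (real m) \<noteq> 0"
    "Gamma (real m + 1) \<noteq> 0" "real m - real j \<noteq> 0" "real m + real j \<noteq> 0"
    using Suc.prems assms by (auto intro!: less_imp_neq[symmetric] Gamma_real_pos)
  have "rr (Suc j) (real m) = rr j (real m) * (real m - real j) / (real m + real j)" by (simp add: rr_Suc2)
  also have "\<dots> = Gamma (real m + 1) / Gamma (real m - real j + 1) / (Gamma (real m + real j) / Gamma (real m))
      * (real m - real j) / (real m + real j)" using Suc by simp
  also have "\<dots> = Gamma (real m + 1) / Gamma (real m - real (Suc j) + 1) / (Gamma (real m + real (Suc j)) / Gamma (real m))"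
    unfolding p1 p2 using nz by (intro ratio_aux) auto
  finally show ?case by simp
qed




lemma ie_deriv:
  fixes \<phi> \<psi> :: "real \<Rightarrow> real"
  assumes eq: "\<And>s. s \<in> {0..t} \<Longrightarrow> \<phi> s = \<phi> 0 + integral {0..s} \<psi>"
    and c: "continuous_on {0..t} \<psi>" and s: "s \<in> {0..t}"
  shows "(\<phi> has_real_derivative \<psi> s) (at s within {0..t})"
proof -
  have "((\<lambda>x. \<phi> 0 + integral {0..x} \<psi>) has_real_derivative \<psi> s) (at s within {0..t})"
    using integral_has_real_derivative[OF c s] by (auto intro!: derivative_eq_intros)
  then show ?thesis unfolding has_field_derivative_def
    by (rule has_derivative_transform[OF s, rotated]) (rule eq)
qed

lemma ie_cont:
  fixes \<phi> \<psi> :: "real \<Rightarrow> real"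
  assumes eq: "\<And>s. s \<in> {0..t} \<Longrightarrow> \<phi> s = \<phi> 0 + integral {0..s} \<psi>"
    and i: "\<psi> integrable_on {0..t}"
  shows "continuous_on {0..t} \<phi>"
proof -
  have "continuous_on {0..t} (\<lambda>s. \<phi> 0 + integral {0..s} \<psi>)"
    using indefinite_integral_continuous_1[OF i] by (intro continuous_intros)
  then show ?thesis using eq by (metis (no_types, lifting) continuous_on_cong)
qed

lemma set_integrable_bdd:
  fixes f :: "real \<Rightarrow> real"
  assumes "f \<in> borel_measurable borel" "\<And>v. v \<in> {a..b} \<Longrightarrow> \<bar>f v\<bar> \<le> B"
  shows "set_integrable lborel {a..b} f"
  unfolding set_integrable_def
  using assms by (intro integrableI_bounded_set_indicator[where B=B]) (auto simp: emeasure_lborel_Icc_eq)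

lemma lbint_eq_integral:
  fixes f :: "real \<Rightarrow> real"
  assumes "0 \<le> t" "f \<in> borel_measurable borel" "\<And>v. v \<in> {0..t} \<Longrightarrow> \<bar>f v\<bar> \<le> B"
  shows "(LBINT v=0..t. f v) = integral {0..t} f" "f integrable_on {0..t}"
proof -
  have si: "set_integrable lborel {0..t} f" using set_integrable_bdd assms by blast
  then show "(LBINT v=0..t. f v) = integral {0..t} f"
    unfolding zero_ereal_def using assms by (intro interval_integral_eq_integral) auto
  show "f integrable_on {0..t}" using si set_borel_integral_eq_integral(1) by blast
qed

lemma fubini_box:
  fixes P :: "'a measure" and f :: "'a \<times> real \<Rightarrow> real" and t :: real
  assumes P: "prob_space P" and f: "f \<in> borel_measurable (P \<Otimes>\<^sub>M lborel)"
    and B: "\<And>x v. x \<in> space P \<Longrightarrow> \<bar>f (x, v)\<bar> \<le> B" and t: "0 \<le> t"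
  shows "(\<integral>x. (LBINT v=0..t. f (x, v)) \<partial>P) = (LBINT v=0..t. \<integral>x. f (x, v) \<partial>P)"
    "(\<lambda>x. LBINT v=0..t. f (x, v)) \<in> borel_measurable P"
    "(\<lambda>v. \<integral>x. f (x, v) \<partial>P) \<in> borel_measurable borel"
proof -
  interpret P: prob_space P by fact
  interpret PL: pair_sigma_finite P lborel
    by (simp add: P.sigma_finite_measure_axioms lborel.sigma_finite_measure_axioms pair_sigma_finite_def)
  let ?I = "{0<..<t}"
  define h where "h p = indicator ?I (snd p) * f p" for p
  have hm[measurable]: "h \<in> borel_measurable (P \<Otimes>\<^sub>M lborel)"
    unfolding h_def using f by measurable
  have lb: "(LBINT v=0..t. g v) = (\<integral>v. indicator ?I v * g v \<partial>lborel)" for g :: "real \<Rightarrow> real"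
    unfolding zero_ereal_def using t by (simp add: interval_integral_Ioo set_lebesgue_integral_def)
  have hB: "\<bar>h (x, v)\<bar> \<le> B * indicator ?I v" if "x \<in> space P" for x v
    using B[OF that, of v] by (auto simp: h_def indicator_def)
  have B0: "0 \<le> B" if "x \<in> space P" for x using B[OF that, of 0] by linarith
  have int_x: "integrable lborel (\<lambda>v. h (x, v))" if x: "x \<in> space P" for x
  proof -
    have "integrable lborel (\<lambda>v. indicator ?I v *\<^sub>R f (x, v))"
      using f x B t by (intro integrableI_bounded_set_indicator[where B=B]) (auto simp: emeasure_lborel_Ioo)
    then show ?thesis by (simp add: h_def)
  qed
  have intB: "integrable lborel (\<lambda>v. B * indicator ?I v :: real)"
    by (intro integrable_mult_right) (simp add: t)
  have inner_bd: "norm (\<integral>v. norm (h (x, v)) \<partial>lborel) \<le> B * t" if x: "x \<in> space P" for x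
  proof -
    have "(\<integral>v. norm (h (x, v)) \<partial>lborel) \<le> (\<integral>v. B * indicator ?I v \<partial>lborel)"
      using hB[OF x] int_x[OF x] intB by (intro integral_mono) auto
    also have "\<dots> = B * t" using t by simp
    finally show ?thesis by simp
  qed
  have int: "integrable (P \<Otimes>\<^sub>M lborel) h"
  proof (rule PL.Fubini_integrable)
    show "integrable P (\<lambda>x. \<integral>v. norm (h (x, v)) \<partial>lborel)"
      using inner_bd by (intro P.integrable_const_bound[where B="B*t"]) auto
    show "AE x in P. integrable lborel (\<lambda>v. h (x, v))" using int_x by auto
  qed fact
  have "(\<integral>v. (\<integral>x. h (x, v) \<partial>P) \<partial>lborel) = (\<integral>x. (\<integral>v. h (x, v) \<partial>lborel) \<partial>P)"
    using PL.Fubini_integral[of "\<lambda>x v. h (x, v)"] int by simp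
  moreover have "(\<integral>x. h (x, v) \<partial>P) = indicator ?I v * (\<integral>x. f (x, v) \<partial>P)" for v
    unfolding h_def by simp
  ultimately show "(\<integral>x. (LBINT v=0..t. f (x, v)) \<partial>P) = (LBINT v=0..t. \<integral>x. f (x, v) \<partial>P)"
    unfolding lb h_def by simp
  show "(\<lambda>x. LBINT v=0..t. f (x, v)) \<in> borel_measurable P"
  proof -
    have "(\<lambda>x. \<integral>v. h (x, v) \<partial>lborel) \<in> borel_measurable P"
      using lborel.borel_measurable_lebesgue_integral[of "\<lambda>x v. h (x, v)" P] hm by simp
    then show ?thesis unfolding lb h_def by simp
  qed
  show "(\<lambda>v. \<integral>x. f (x, v) \<partial>P) \<in> borel_measurable borel"
  proof -
    have m1: "(\<lambda>(v, x). f (x, v)) \<in> borel_measurable (lborel \<Otimes>\<^sub>M P)"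
      by (rule measurable_pair_swap_iff[THEN iffD1, OF f])
    have "(\<lambda>v. \<integral>x. f (x, v) \<partial>P) \<in> borel_measurable lborel"
      by (rule P.borel_measurable_lebesgue_integral[where f="\<lambda>v x. f (x, v)"]) (rule m1)
    then show ?thesis by (simp only: measurable_lborel2)
  qed
qed




lemma (in prob_space) indep_integral:
  fixes R T :: "'a \<Rightarrow> real" and g :: "real \<times> real \<Rightarrow> real"
  assumes ind: "indep_var borel R borel T"
    and g[measurable]: "g \<in> borel_measurable (borel \<Otimes>\<^sub>M borel)" and B: "\<And>p. \<bar>g p\<bar> \<le> B"
  shows "(\<integral>\<omega>. g (R \<omega>, T \<omega>) \<partial>M) = (\<integral>\<omega>. (\<integral>\<omega>'. g (R \<omega>, T \<omega>') \<partial>M) \<partial>M)"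
proof -
  have rv[measurable]: "R \<in> borel_measurable M" "T \<in> borel_measurable M"
    using ind indep_var_rv1 indep_var_rv2 by auto
  let ?PR = "distr M borel R" let ?PT = "distr M borel T"
  interpret PR: prob_space ?PR by (rule prob_space_distr) (rule rv)
  interpret PT: prob_space ?PT by (rule prob_space_distr) (rule rv)
  interpret PP: pair_prob_space ?PR ?PT by unfold_locales
  have J: "?PR \<Otimes>\<^sub>M ?PT = distr M (borel \<Otimes>\<^sub>M borel) (\<lambda>\<omega>. (R \<omega>, T \<omega>))"
    using ind indep_var_distribution_eq by blast
  have "(\<integral>\<omega>. g (R \<omega>, T \<omega>) \<partial>M) = (\<integral>p. g p \<partial>distr M (borel \<Otimes>\<^sub>M borel) (\<lambda>\<omega>. (R \<omega>, T \<omega>)))"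
    by (rule integral_distr[symmetric]) measurable
  also have "\<dots> = (\<integral>p. g p \<partial>(?PR \<Otimes>\<^sub>M ?PT))" by (simp add: J)
  also have "\<dots> = (\<integral>r. (\<integral>\<tau>. g (r, \<tau>) \<partial>?PT) \<partial>?PR)"
  proof (rule PP.integral_fst'[symmetric])
    show "integrable (?PR \<Otimes>\<^sub>M ?PT) g"
      using B by (intro PP.integrable_const_bound[where B=B]) auto
  qed
  also have "\<dots> = (\<integral>\<omega>. (\<integral>\<tau>. g (R \<omega>, \<tau>) \<partial>?PT) \<partial>M)"
  proof (rule integral_distr)
    have "(\<lambda>(r, \<tau>). g (r, \<tau>)) \<in> borel_measurable (borel \<Otimes>\<^sub>M ?PT)"
      by (simp add: measurable_cong_sets[OF sets_pair_measure_cong[OF refl sets_distr] refl])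
    then show "(\<lambda>r. \<integral>\<tau>. g (r, \<tau>) \<partial>?PT) \<in> borel_measurable borel"
      by (rule PT.borel_measurable_lebesgue_integral[where f="\<lambda>r \<tau>. g (r, \<tau>)"])
  qed (rule rv)
  also have "\<dots> = (\<integral>\<omega>. (\<integral>\<omega>'. g (R \<omega>, T \<omega>') \<partial>M) \<partial>M)"
    by (intro Bochner_Integration.integral_cong refl integral_distr) (auto intro: rv)
  finally show ?thesis .
qed




lemma exp_inner:
  fixes r l t :: real
  assumes r: "0 \<le> r" and l: "0 < l" and t: "0 \<le> t"
  shows "l * (LBINT v=0..t. (if r \<le> v then exp (- (v - r) * l) else 0))
         = (if r \<le> t then 1 - exp (- (t - r) * l) else 0)"
proof -
  define g where "g v = (if r \<le> v then exp (- (v - r) * l) else 0)" for v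
  have gm: "g \<in> borel_measurable borel" unfolding g_def by measurable
  have gb: "\<bar>g v\<bar> \<le> 1" for v using l by (auto simp: g_def mult_le_0_iff)
  have L: "(LBINT v=0..t. g v) = integral {0..t} g"
    using lbint_eq_integral(1)[OF t gm gb] by simp
  define \<Phi> where "\<Phi> v = (1 - exp (- (max v r - r) * l)) / l" for v
  have "(g has_integral \<Phi> t - \<Phi> 0) {0..t}"
  proof (rule fundamental_theorem_of_calculus_interior_strong[where S="{r}"])
    show "continuous_on {0..t} \<Phi>" unfolding \<Phi>_def using l by (intro continuous_intros) auto
    fix x assume x: "x \<in> {0<..<t} - {r}"
    show "(\<Phi> has_vector_derivative g x) (at x)"
    proof (cases "r < x")
      case True
      have "((\<lambda>v. (1 - exp (- (v - r) * l)) / l) has_real_derivative g x) (at x)"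
        using True l by (auto intro!: derivative_eq_intros simp: g_def)
      then have "(\<Phi> has_real_derivative g x) (at x)"
        by (rule has_field_derivative_transform_within_open[where S="{r<..}"]) (use True in \<open>auto simp: \<Phi>_def\<close>)
      then show ?thesis by (simp add: has_real_derivative_iff_has_vector_derivative)
    next
      case False
      then have xr: "x < r" using x by auto
      have "((\<lambda>v. 0) has_real_derivative g x) (at x)"
        using xr by (auto intro!: derivative_eq_intros simp: g_def)
      then have "(\<Phi> has_real_derivative g x) (at x)"
        by (rule has_field_derivative_transform_within_open[where S="{..<r}"]) (use xr in \<open>auto simp: \<Phi>_def\<close>)
      then show ?thesis by (simp add: has_real_derivative_iff_has_vector_derivative)
    qed
  qed (use t in auto)
  then have "integral {0..t} g = \<Phi> t - \<Phi> 0" by (rule integral_unique)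
  moreover have "\<Phi> 0 = 0" using r by (simp add: \<Phi>_def)
  moreover have "l * \<Phi> t = (if r \<le> t then 1 - exp (- (t - r) * l) else 0)"
    using l by (auto simp: \<Phi>_def max_def)
  ultimately show ?thesis using L by (simp add: g_def[symmetric])
qed


lemma (in prob_space) exp_cdf:
  assumes D: "distributed M lborel T (exponential_density l)" and l: "0 < l"
  shows "prob {\<omega>\<in>space M. T \<omega> \<le> a} = (if 0 \<le> a then 1 - exp (- a * l) else 0)"
proof (cases "0 \<le> a")
  case True
  have "prob {\<omega>\<in>space M. T \<omega> \<le> a} = 1 - exp (- a * l)"
    by (rule exponential_distributedD_le[OF D True l])
  then show ?thesis using True by (simp only: if_True)
next
  case False
  have Tm[measurable]: "T \<in> borel_measurable M"
    using distributed_measurable[OF D] by simp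
  have "prob {\<omega>\<in>space M. T \<omega> \<le> a} \<le> prob {\<omega>\<in>space M. T \<omega> \<le> 0}"
    using False by (intro finite_measure_mono) auto
  also have "\<dots> = 0" using exponential_distributedD_le[OF D _ l, of 0] by simp
  finally show ?thesis using False measure_nonneg[of M] by (simp add: antisym)
qed

lemma (in prob_space) exp_nonneg_AE:
  assumes D: "distributed M lborel T (exponential_density l)" and l: "0 < l"
  shows "AE \<omega> in M. 0 \<le> T \<omega>"
proof -
  have Tm[measurable]: "T \<in> borel_measurable M"
    using distributed_measurable[OF D] by simp
  have "prob {\<omega>\<in>space M. T \<omega> < 0} \<le> prob {\<omega>\<in>space M. T \<omega> \<le> 0}"
    by (intro finite_measure_mono) auto
  also have "\<dots> = 0" using exponential_distributedD_le[OF D _ l, of 0] by simp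
  finally have "prob {\<omega>\<in>space M. T \<omega> < 0} = 0" using measure_nonneg[of M] by (simp add: antisym)
  then have "emeasure M {\<omega>\<in>space M. \<not> 0 \<le> T \<omega>} = 0"
    by (simp add: emeasure_eq_measure not_le)
  then show ?thesis by (subst AE_iff_measurable[OF _ refl]) auto
qed

lemma (in prob_space) prob_as_integral:
  assumes "Measurable.pred M P"
  shows "prob {\<omega>\<in>space M. P \<omega>} = (\<integral>\<omega>. (if P \<omega> then 1 else 0) \<partial>M)"
proof -
  have "prob {\<omega>\<in>space M. P \<omega>} = (\<integral>\<omega>. indicator {\<omega>\<in>space M. P \<omega>} \<omega> \<partial>M)"
    by (simp add: Int_absorb2)
  also have "\<dots> = (\<integral>\<omega>. (if P \<omega> then 1 else 0) \<partial>M)"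
    by (intro Bochner_Integration.integral_cong) (auto simp: indicator_def)
  finally show ?thesis .
qed

lemma (in prob_space) exp_conv:
  fixes R T :: "'a \<Rightarrow> real" and l t :: real
  assumes ind: "indep_var borel R borel T"
    and D: "distributed M lborel T (exponential_density l)" and l: "0 < l"
    and Rpos: "AE \<omega> in M. 0 \<le> R \<omega>" and t: "0 \<le> t"
  shows "prob {\<omega>\<in>space M. R \<omega> + T \<omega> \<le> t}
         = l * (LBINT v=0..t. prob {\<omega>\<in>space M. R \<omega> \<le> v \<and> v < R \<omega> + T \<omega>})"
proof -
  have rv[measurable]: "R \<in> borel_measurable M" "T \<in> borel_measurable M"
    using ind indep_var_rv1 indep_var_rv2 by auto
  define k where "k p = (if fst p \<le> snd p then exp (- (snd p - fst p) * l) else 0)" for p :: "real \<times> real"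
  have km[measurable]: "k \<in> borel_measurable (borel \<Otimes>\<^sub>M borel)" unfolding k_def by measurable
  have kb: "\<bar>k p\<bar> \<le> 1" for p using l by (auto simp: k_def mult_le_0_iff)
  have "prob {\<omega>\<in>space M. R \<omega> + T \<omega> \<le> t} = (\<integral>\<omega>. (if R \<omega> + T \<omega> \<le> t then 1 else 0) \<partial>M)"
    by (rule prob_as_integral) measurable
  also have "\<dots> = (\<integral>\<omega>. (\<integral>\<omega>'. (if R \<omega> + T \<omega>' \<le> t then 1 else 0) \<partial>M) \<partial>M)"
    using indep_integral[OF ind, of "\<lambda>p. if fst p + snd p \<le> t then 1 else 0" 1] by simp
  also have "\<dots> = (\<integral>\<omega>. (if R \<omega> \<le> t then 1 - exp (- (t - R \<omega>) * l) else 0) \<partial>M)"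
  proof (intro Bochner_Integration.integral_cong refl)
    fix \<omega>
    have "(\<integral>\<omega>'. (if R \<omega> + T \<omega>' \<le> t then 1 else 0) \<partial>M) = prob {\<omega>'\<in>space M. T \<omega>' \<le> t - R \<omega>}"
      by (subst prob_as_integral) (auto intro!: Bochner_Integration.integral_cong simp: algebra_simps)
    also have "\<dots> = (if R \<omega> \<le> t then 1 - exp (- (t - R \<omega>) * l) else 0)"
      using exp_cdf[OF D l] by simp
    finally show "(\<integral>\<omega>'. (if R \<omega> + T \<omega>' \<le> t then 1 else 0) \<partial>M) = (if R \<omega> \<le> t then 1 - exp (- (t - R \<omega>) * l) else 0)" .
  qed
  finally have LHS: "prob {\<omega>\<in>space M. R \<omega> + T \<omega> \<le> t} = (\<integral>\<omega>. (if R \<omega> \<le> t then 1 - exp (- (t - R \<omega>) * l) else 0) \<partial>M)" .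
  have inner: "prob {\<omega>\<in>space M. R \<omega> \<le> v \<and> v < R \<omega> + T \<omega>} = (\<integral>\<omega>. k (R \<omega>, v) \<partial>M)" for v
  proof -
    have "prob {\<omega>\<in>space M. R \<omega> \<le> v \<and> v < R \<omega> + T \<omega>} = (\<integral>\<omega>. (if R \<omega> \<le> v \<and> v < R \<omega> + T \<omega> then 1 else 0) \<partial>M)"
      by (rule prob_as_integral) measurable
    also have "\<dots> = (\<integral>\<omega>. (\<integral>\<omega>'. (if R \<omega> \<le> v \<and> v < R \<omega> + T \<omega>' then 1 else 0) \<partial>M) \<partial>M)"
      using indep_integral[OF ind, of "\<lambda>p. if fst p \<le> v \<and> v < fst p + snd p then 1 else 0" 1] by simp
    also have "\<dots> = (\<integral>\<omega>. k (R \<omega>, v) \<partial>M)"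
    proof (intro Bochner_Integration.integral_cong refl)
      fix \<omega>
      show "(\<integral>\<omega>'. (if R \<omega> \<le> v \<and> v < R \<omega> + T \<omega>' then 1 else 0) \<partial>M) = k (R \<omega>, v)"
      proof (cases "R \<omega> \<le> v")
        case True
        have "(\<integral>\<omega>'. (if R \<omega> \<le> v \<and> v < R \<omega> + T \<omega>' then 1 else 0) \<partial>M) = prob {\<omega>'\<in>space M. v - R \<omega> < T \<omega>'}"
          using True by (subst prob_as_integral) (auto intro!: Bochner_Integration.integral_cong simp: algebra_simps)
        also have "\<dots> = exp (- (v - R \<omega>) * l)"
          using exponential_distributedD_gt[OF D _ l, of "v - R \<omega>"] True by simp
        finally show ?thesis using True by (simp add: k_def)
      qed (simp add: k_def)
    qed
    finally show ?thesis .
  qed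
  have "l * (LBINT v=0..t. prob {\<omega>\<in>space M. R \<omega> \<le> v \<and> v < R \<omega> + T \<omega>})
      = l * (LBINT v=0..t. (\<integral>\<omega>. k (R \<omega>, v) \<partial>M))"
    by (simp add: inner)
  also have "\<dots> = l * (\<integral>\<omega>. (LBINT v=0..t. k (R \<omega>, v)) \<partial>M)"
  proof -
    have fm: "(\<lambda>p. k (R (fst p), snd p)) \<in> borel_measurable (M \<Otimes>\<^sub>M lborel)" by measurable
    show ?thesis
      using fubini_box(1)[OF prob_space_axioms fm, of 1 t] kb t by simp
  qed
  also have "\<dots> = (\<integral>\<omega>. l * (LBINT v=0..t. k (R \<omega>, v)) \<partial>M)" by simp
  also have "\<dots> = (\<integral>\<omega>. (if R \<omega> \<le> t then 1 - exp (- (t - R \<omega>) * l) else 0) \<partial>M)"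
  proof (rule integral_cong_AE)
    have fm: "(\<lambda>p. k (R (fst p), snd p)) \<in> borel_measurable (M \<Otimes>\<^sub>M lborel)" by measurable
    show "(\<lambda>\<omega>. l * (LBINT v=0..t. k (R \<omega>, v))) \<in> borel_measurable M"
      using fubini_box(2)[OF prob_space_axioms fm, of 1 t] kb t by simp
    show "(\<lambda>\<omega>. if R \<omega> \<le> t then 1 - exp (- (t - R \<omega>) * l) else 0) \<in> borel_measurable M" by measurable
    show "AE \<omega> in M. l * (LBINT v=0..t. k (R \<omega>, v)) = (if R \<omega> \<le> t then 1 - exp (- (t - R \<omega>) * l) else 0)"
      using Rpos
    proof eventually_elim
      case (elim \<omega>)
      have kk: "(\<lambda>v. k (R \<omega>, v)) = (\<lambda>v. if R \<omega> \<le> v then exp (- (v - R \<omega>) * l) else 0)"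
        by (simp add: k_def fun_eq_iff)
      show ?case unfolding kk by (rule exp_inner[OF elim l t])
    qed
  qed
  finally show ?thesis using LHS by simp
qed




lemma (in prob_space) indep_vars_sum_rev:
  fixes X :: "'i \<Rightarrow> 'a \<Rightarrow> real"
  assumes I: "finite I" "i \<notin> I" and indep: "indep_vars (\<lambda>_. borel) X (insert i I)"
  shows "indep_var borel (\<lambda>\<omega>. \<Sum>i\<in>I. X i \<omega>) borel (X i)"
proof -
  have "indep_var
    borel ((\<lambda>f. \<Sum>i\<in>I. f i) \<circ> (\<lambda>\<omega>. restrict (\<lambda>i. X i \<omega>) I))
    borel ((\<lambda>f. f i) \<circ> (\<lambda>\<omega>. restrict (\<lambda>i. X i \<omega>) {i}))"
    using I by (intro indep_var_compose[OF indep_var_restrict[OF indep]] ) auto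
  also have "((\<lambda>f. f i) \<circ> (\<lambda>\<omega>. restrict (\<lambda>i. X i \<omega>) {i})) = X i"
    by auto
  also have "((\<lambda>f. \<Sum>i\<in>I. f i) \<circ> (\<lambda>\<omega>. restrict (\<lambda>i. X i \<omega>) I)) = (\<lambda>\<omega>. \<Sum>i\<in>I. X i \<omega>)"
    by (auto cong: rev_conj_cong)
  finally show ?thesis .
qed

definition VV :: "nat \<Rightarrow> (nat \<Rightarrow> 'b \<Rightarrow> real) \<Rightarrow> nat \<Rightarrow> 'b \<Rightarrow> real" where
  "VV m T k \<omega> = (\<Sum>j\<in>{k<..m}. T j \<omega>)"

definition GK :: "'b measure \<Rightarrow> nat \<Rightarrow> (nat \<Rightarrow> 'b \<Rightarrow> real) \<Rightarrow> nat \<Rightarrow> real \<Rightarrow> real" where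
  "GK Mk m T k u = measure Mk {\<omega>\<in>space Mk. u < VV m T k \<omega>}"

locale kingman =
  fixes Mk :: "'b measure" and T :: "nat \<Rightarrow> 'b \<Rightarrow> real" and m :: nat
  assumes K: "kingman_times Mk T m" and m2: "2 \<le> m"
begin

sublocale prob_space Mk using K by (simp add: kingman_times_def)

lemma indep: "indep_vars (\<lambda>_. borel) T {2..m}" using K by (simp add: kingman_times_def)

lemma distr: "j \<in> {2..m} \<Longrightarrow> distributed Mk lborel (T j) (exponential_density (lam j))"
  using K by (simp add: kingman_times_def lam_def)

lemma Tm[measurable]: "j \<in> {2..m} \<Longrightarrow> T j \<in> borel_measurable Mk"
  using distributed_measurable[OF distr] by simp

lemma VVm[measurable]: "1 \<le> k \<Longrightarrow> VV m T k \<in> borel_measurable Mk"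
  unfolding VV_def by (intro borel_measurable_sum Tm) auto

lemma T_AE: "AE \<omega> in Mk. \<forall>j\<in>{2..m}. 0 \<le> T j \<omega>"
  by (intro AE_finite_allI exp_nonneg_AE[OF distr]) (auto intro: lam_pos)

lemma GK_bounds: "0 \<le> GK Mk m T k u" "GK Mk m T k u \<le> 1"
  unfolding GK_def by (auto simp: measure_nonneg)

lemma GK_mono: "1 \<le> k \<Longrightarrow> u \<le> u' \<Longrightarrow> GK Mk m T k u' \<le> GK Mk m T k u"
  unfolding GK_def by (intro finite_measure_mono) auto

lemma GK_meas: "1 \<le> k \<Longrightarrow> GK Mk m T k \<in> borel_measurable borel"
proof -
  assume k: "1 \<le> k"
  have "mono (\<lambda>u. - GK Mk m T k u)" using GK_mono[OF k] by (auto simp: mono_def)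
  then have "(\<lambda>u. - GK Mk m T k u) \<in> borel_measurable borel" by (rule borel_measurable_mono)
  then have "(\<lambda>u. - (- GK Mk m T k u)) \<in> borel_measurable borel" by measurable
  then show ?thesis by simp
qed

lemma GK_m: "0 \<le> u \<Longrightarrow> GK Mk m T m u = 0"
  by (simp add: GK_def VV_def not_less)

lemma GK_eq1:
  assumes k: "k \<in> {1..<m}" and u: "0 \<le> u"
  shows "1 - GK Mk m T k u = lam (Suc k) * (LBINT v=0..u. GK Mk m T k v - GK Mk m T (Suc k) v)"
proof -
  let ?R = "VV m T (Suc k)" and ?S = "T (Suc k)"
  have sk: "Suc k \<in> {2..m}" using k by auto
  have ind: "indep_var borel ?R borel ?S"
    unfolding VV_def
    by (rule indep_vars_sum_rev) (use k in \<open>auto intro!: indep_vars_subset[OF indep]\<close>)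
  have AEpos: "AE \<omega> in Mk. \<forall>j\<in>{2..m}. 0 \<le> T j \<omega>" by (rule T_AE)
  have Rpos: "AE \<omega> in Mk. 0 \<le> ?R \<omega>"
    using AEpos by eventually_elim (auto simp: VV_def intro!: sum_nonneg)
  have Spos: "AE \<omega> in Mk. 0 \<le> ?S \<omega>"
    using AEpos by eventually_elim (use sk in auto)
  have split: "VV m T k \<omega> = ?S \<omega> + ?R \<omega>" for \<omega>
  proof -
    have "{k<..m} = insert (Suc k) {Suc k<..m}" using k by auto
    then show ?thesis unfolding VV_def by simp
  qed
  have [measurable]: "?R \<in> borel_measurable Mk" "?S \<in> borel_measurable Mk" "VV m T k \<in> borel_measurable Mk"
    using k sk by auto
  have lpos: "0 < lam (Suc k)" using sk by (intro lam_pos) auto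
  have E: "prob {\<omega>\<in>space Mk. ?R \<omega> + ?S \<omega> \<le> u}
         = lam (Suc k) * (LBINT v=0..u. prob {\<omega>\<in>space Mk. ?R \<omega> \<le> v \<and> v < ?R \<omega> + ?S \<omega>})"
    by (rule exp_conv[OF ind distr[OF sk] lpos Rpos u])
  have L: "prob {\<omega>\<in>space Mk. ?R \<omega> + ?S \<omega> \<le> u} = 1 - GK Mk m T k u"
  proof -
    have "{\<omega>\<in>space Mk. ?R \<omega> + ?S \<omega> \<le> u} = space Mk - {\<omega>\<in>space Mk. u < VV m T k \<omega>}"
      by (auto simp: split)
    then show ?thesis unfolding GK_def by (simp add: prob_compl)
  qed
  have I: "prob {\<omega>\<in>space Mk. ?R \<omega> \<le> v \<and> v < ?R \<omega> + ?S \<omega>} = GK Mk m T k v - GK Mk m T (Suc k) v" for v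
  proof -
    have "GK Mk m T k v = prob ({\<omega>\<in>space Mk. ?R \<omega> \<le> v \<and> v < ?R \<omega> + ?S \<omega>} \<union> {\<omega>\<in>space Mk. v < ?R \<omega> \<and> v < VV m T k \<omega>})"
      unfolding GK_def by (intro arg_cong[where f=prob]) (auto simp: split)
    also have "\<dots> = prob {\<omega>\<in>space Mk. ?R \<omega> \<le> v \<and> v < ?R \<omega> + ?S \<omega>} + prob {\<omega>\<in>space Mk. v < ?R \<omega> \<and> v < VV m T k \<omega>}"
      by (intro finite_measure_Union) auto
    also have "prob {\<omega>\<in>space Mk. v < ?R \<omega> \<and> v < VV m T k \<omega>} = GK Mk m T (Suc k) v"
    proof -
      have "AE \<omega> in Mk. (\<omega> \<in> {\<omega>\<in>space Mk. v < ?R \<omega> \<and> v < VV m T k \<omega>}) = (\<omega> \<in> {\<omega>\<in>space Mk. v < ?R \<omega>})"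
        using Spos by eventually_elim (auto simp: split)
      then show ?thesis unfolding GK_def by (intro finite_measure_eq_AE) auto
    qed
    finally show ?thesis by simp
  qed
  show ?thesis using E unfolding L I .
qed


lemma GK_ie:
  assumes k: "k \<in> {1..<m}" and u: "0 \<le> u"
  shows "GK Mk m T k u = 1 + integral {0..u} (\<lambda>v. - lam (Suc k) * (GK Mk m T k v - GK Mk m T (Suc k) v))"
    "(\<lambda>v. - lam (Suc k) * (GK Mk m T k v - GK Mk m T (Suc k) v)) integrable_on {0..u}"
proof -
  let ?g = "\<lambda>v. GK Mk m T k v - GK Mk m T (Suc k) v"
  have gm: "?g \<in> borel_measurable borel" using k GK_meas by (auto intro!: borel_measurable_diff)
  have gb: "\<bar>?g v\<bar> \<le> 1" for v using GK_bounds[of k v] GK_bounds[of "Suc k" v] by linarith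
  have L: "(LBINT v=0..u. ?g v) = integral {0..u} ?g" "?g integrable_on {0..u}"
    using lbint_eq_integral[OF u gm gb] by auto
  show "GK Mk m T k u = 1 + integral {0..u} (\<lambda>v. - lam (Suc k) * ?g v)"
    using GK_eq1[OF k u] L(1) by simp
  show "(\<lambda>v. - lam (Suc k) * ?g v) integrable_on {0..u}"
    using integrable_on_cmult_left[OF L(2), of "- lam (Suc k)"] by simp
qed

lemma GK_0: "k \<in> {1..<m} \<Longrightarrow> GK Mk m T k 0 = 1"
  using GK_ie(1)[of k 0] by simp

lemma GK_cont:
  assumes j: "j \<in> {1..m}" and t: "0 \<le> t"
  shows "continuous_on {0..t} (GK Mk m T j)"
proof (cases "j = m")
  case True
  have "continuous_on {0..t} (\<lambda>u. 0::real)" by simp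
  then show ?thesis using True GK_m by (metis (no_types, lifting) atLeastAtMost_iff continuous_on_cong)
next
  case False
  then have k: "j \<in> {1..<m}" using j by auto
  show ?thesis
  proof (rule ie_cont)
    fix s assume "s \<in> {0..t}"
    then show "GK Mk m T j s = GK Mk m T j 0 + integral {0..s} (\<lambda>v. - lam (Suc j) * (GK Mk m T j v - GK Mk m T (Suc j) v))"
      using GK_ie(1)[OF k] GK_0[OF k] by auto
  qed (rule GK_ie(2)[OF k t])
qed

lemma GK_deriv:
  assumes k: "k \<in> {1..<m}" and t: "0 \<le> t" and u: "u \<in> {0..t}"
  shows "(GK Mk m T k has_real_derivative (- lam (Suc k) * (GK Mk m T k u - GK Mk m T (Suc k) u))) (at u within {0..t})"
proof (rule ie_deriv[OF _ _ u])
  fix s assume "s \<in> {0..t}"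
  then show "GK Mk m T k s = GK Mk m T k 0 + integral {0..s} (\<lambda>v. - lam (Suc k) * (GK Mk m T k v - GK Mk m T (Suc k) v))"
    using GK_ie(1)[OF k] GK_0[OF k] by auto
next
  have "continuous_on {0..t} (GK Mk m T k)" "continuous_on {0..t} (GK Mk m T (Suc k))"
    using GK_cont[OF _ t, of k] GK_cont[OF _ t, of "Suc k"] k by auto
  then show "continuous_on {0..t} (\<lambda>v. - lam (Suc k) * (GK Mk m T k v - GK Mk m T (Suc k) v))"
    by (intro continuous_intros)
qed

lemma HH_closed:
  assumes t: "0 \<le> t"
  shows "HH m m t = GK Mk m T 1 t + (\<Sum>k=1..<m. GK Mk m T k t)"
proof -
  have "HH m m t = HH m 1 0 + (\<Sum>k=1..<m. GK Mk m T k t * (HH m (Suc k) 0 - HH m k 0))"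
  proof (rule duality[OF t])
    show "1 \<le> m" using m2 by simp
    show "\<forall>u\<in>{0..t}. GK Mk m T m u = 0" using GK_m by auto
    show "\<forall>k\<in>{1..<m}. GK Mk m T k 0 = 1" using GK_0 by auto
    show "\<forall>k\<in>{1..<m}. \<forall>u\<in>{0..t}. (GK Mk m T k has_real_derivative (- lam (Suc k) * (GK Mk m T k u - GK Mk m T (Suc k) u))) (at u within {0..t})"
      using GK_deriv[OF _ t] by auto
    show "\<forall>k\<in>{1..m}. \<forall>u\<in>{0..t}. (HH m k has_real_derivative (lam k * (HH m (k-1) u - HH m k u))) (at u within {0..t})"
      using HH_deriv by auto
  qed
  also have "\<dots> = (\<Sum>k=1..<m. GK Mk m T k t * (1 + (if k = 1 then 1 else 0)))"
  proof -
    have "HH m 1 0 = 0" using HH_0[of 1 m] m2 by simp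
    moreover have "HH m (Suc k) 0 - HH m k 0 = 1 + (if k = 1 then 1 else 0)" if "k \<in> {1..<m}" for k
      using HH_0[of k m] HH_0[of "Suc k" m] that by auto
    ultimately show ?thesis by simp
  qed
  also have "\<dots> = (\<Sum>k=1..<m. GK Mk m T k t + (if k = 1 then GK Mk m T k t else 0))"
    by (intro sum.cong) auto
  also have "\<dots> = (\<Sum>k=1..<m. GK Mk m T k t) + (\<Sum>k=1..<m. (if k = 1 then GK Mk m T k t else 0))"
    by (rule sum.distrib)
  also have "(\<Sum>k=1..<m. (if k = 1 then GK Mk m T k t else 0)) = GK Mk m T 1 t"
    using m2 by (simp add: sum.delta)
  finally show ?thesis by simp
qed


lemma VV_antimono:
  assumes pos: "\<forall>j\<in>{2..m}. 0 \<le> T j \<omega>" and k: "1 \<le> k" "k \<le> k'"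
  shows "VV m T k' \<omega> \<le> VV m T k \<omega>"
  unfolding VV_def
proof (rule sum_mono2)
  show "{k'<..m} \<subseteq> {k<..m}" using k by auto
  fix b assume "b \<in> {k<..m} - {k'<..m}"
  then show "0 \<le> T b \<omega>" using pos k by auto
qed simp

lemma KS_char:
  assumes u: "0 \<le> u" and pos: "\<forall>j\<in>{2..m}. 0 \<le> T j \<omega>"
  shows "real (kingman_state m T u \<omega>) = 1 + (\<Sum>k=1..<m. if u < VV m T k \<omega> then 1 else 0)"
    "kingman_state m T u \<omega> = 1 \<longleftrightarrow> \<not> u < VV m T 1 \<omega>"
proof -
  define P where "P k = (1 \<le> k \<and> VV m T k \<omega> \<le> u)" for k
  have A: "kingman_state m T u \<omega> = (LEAST k. P k)"
    unfolding kingman_state_def P_def VV_def ..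
  define a where "a = (LEAST k. P k)"
  have Pm: "P m" using m2 u by (simp add: P_def VV_def)
  have Pa: "P a" unfolding a_def using Pm by (rule LeastI)
  have am: "a \<le> m" unfolding a_def using Pm by (rule Least_le)
  have nP: "\<not> P k" if "k < a" for k using that unfolding a_def by (rule not_less_Least)
  have S: "{k\<in>{1..<m}. u < VV m T k \<omega>} = {1..<a}"
  proof (intro set_eqI iffI)
    fix k assume "k \<in> {k\<in>{1..<m}. u < VV m T k \<omega>}"
    then have k: "1 \<le> k" "k < m" "u < VV m T k \<omega>" by auto
    have "k < a"
    proof (rule ccontr)
      assume "\<not> k < a"
      then have "VV m T k \<omega> \<le> VV m T a \<omega>" using VV_antimono[OF pos, of a k] Pa by (auto simp: P_def)
      then show False using Pa k by (auto simp: P_def)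
    qed
    then show "k \<in> {1..<a}" using k by auto
  next
    fix k assume "k \<in> {1..<a}"
    then show "k \<in> {k\<in>{1..<m}. u < VV m T k \<omega>}" using nP[of k] am by (auto simp: P_def)
  qed
  have a1: "1 \<le> a" using Pa by (simp add: P_def)
  have "(\<Sum>k=1..<m. if u < VV m T k \<omega> then 1 else 0 :: real) = (\<Sum>k\<in>{k\<in>{1..<m}. u < VV m T k \<omega>}. 1)"
    using sum.inter_filter[of "{1..<m}" "\<lambda>_. 1::real" "\<lambda>k. u < VV m T k \<omega>"] by simp
  also have "\<dots> = real (a - 1)" unfolding S by simp
  finally show "real (kingman_state m T u \<omega>) = 1 + (\<Sum>k=1..<m. if u < VV m T k \<omega> then 1 else 0)"
    using a1 A a_def by simp
  have "u < VV m T 1 \<omega> \<longleftrightarrow> 1 \<in> {k\<in>{1..<m}. u < VV m T k \<omega>}" using m2 by auto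
  also have "\<dots> \<longleftrightarrow> 1 < a" unfolding S by auto
  finally show "kingman_state m T u \<omega> = 1 \<longleftrightarrow> \<not> u < VV m T 1 \<omega>"
    using a1 A a_def by auto
qed

lemma KS_meas: "(\<lambda>\<omega>. kingman_state m T u \<omega>) \<in> measurable Mk (count_space UNIV)"
  unfolding kingman_state_def
proof (rule measurable_Least)
  fix k
  show "Measurable.pred Mk (\<lambda>\<omega>. 1 \<le> k \<and> (\<Sum>j\<in>{k<..m}. T j \<omega>) \<le> u)"
  proof (cases "k = 0")
    case True then show ?thesis by simp
  next
    case False
    then have "VV m T k \<in> borel_measurable Mk" by (intro VVm) simp
    then show ?thesis unfolding VV_def[symmetric] by measurable
  qed
qed

lemma KS_expect:
  assumes u: "0 \<le> u"
  shows "integral\<^sup>L Mk (\<lambda>\<omega>. real (kingman_state m T u \<omega>))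
         - measure Mk {\<omega>\<in>space Mk. kingman_state m T u \<omega> = 1} = HH m m u"
proof -
  have ksm[measurable]: "(\<lambda>\<omega>. kingman_state m T u \<omega>) \<in> measurable Mk (count_space UNIV)" by (rule KS_meas)
  have VVm'[measurable]: "VV m T k \<in> borel_measurable Mk" if "k \<in> {1..<m}" for k using that by (intro VVm) simp
  have "integral\<^sup>L Mk (\<lambda>\<omega>. real (kingman_state m T u \<omega>))
        = (\<integral>\<omega>. 1 + (\<Sum>k=1..<m. if u < VV m T k \<omega> then 1 else 0) \<partial>Mk)"
  proof (rule integral_cong_AE)
    show "(\<lambda>\<omega>. real (kingman_state m T u \<omega>)) \<in> borel_measurable Mk" by measurable
    show "(\<lambda>\<omega>. 1 + (\<Sum>k=1..<m. if u < VV m T k \<omega> then 1 else 0 :: real)) \<in> borel_measurable Mk"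
      by (intro borel_measurable_add borel_measurable_const borel_measurable_sum) measurable
    show "AE \<omega> in Mk. real (kingman_state m T u \<omega>) = 1 + (\<Sum>k=1..<m. if u < VV m T k \<omega> then 1 else 0)"
      using T_AE by eventually_elim (rule KS_char(1)[OF u])
  qed
  also have "\<dots> = 1 + (\<Sum>k=1..<m. GK Mk m T k u)"
  proof -
    have int: "integrable Mk (\<lambda>\<omega>. if u < VV m T k \<omega> then 1 else 0 :: real)" if "k \<in> {1..<m}" for k
      using that by (intro integrable_const_bound[where B=1]) auto
    have "(\<integral>\<omega>. 1 + (\<Sum>k=1..<m. if u < VV m T k \<omega> then 1 else 0) \<partial>Mk)
        = 1 + (\<Sum>k=1..<m. (\<integral>\<omega>. (if u < VV m T k \<omega> then 1 else 0 :: real) \<partial>Mk))"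
    proof -
      have i2: "integrable Mk (\<lambda>\<omega>. \<Sum>k=1..<m. if u < VV m T k \<omega> then 1 else 0 :: real)"
        using int by (intro Bochner_Integration.integrable_sum) auto
      have "(\<integral>\<omega>. 1 + (\<Sum>k=1..<m. if u < VV m T k \<omega> then 1 else 0 :: real) \<partial>Mk)
          = (\<integral>\<omega>. 1 \<partial>Mk) + (\<integral>\<omega>. (\<Sum>k=1..<m. if u < VV m T k \<omega> then 1 else 0 :: real) \<partial>Mk)"
        by (rule Bochner_Integration.integral_add[OF _ i2]) simp
      also have "(\<integral>\<omega>. (\<Sum>k=1..<m. if u < VV m T k \<omega> then 1 else 0 :: real) \<partial>Mk)
          = (\<Sum>k=1..<m. (\<integral>\<omega>. (if u < VV m T k \<omega> then 1 else 0 :: real) \<partial>Mk))"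
        using int by (intro Bochner_Integration.integral_sum) auto
      finally show ?thesis by (simp add: prob_space)
    qed
    also have "(\<Sum>k=1..<m. (\<integral>\<omega>. (if u < VV m T k \<omega> then 1 else 0 :: real) \<partial>Mk)) = (\<Sum>k=1..<m. GK Mk m T k u)"
    proof (intro sum.cong refl)
      fix k assume "k \<in> {1..<m}"
      then show "(\<integral>\<omega>. (if u < VV m T k \<omega> then 1 else 0 :: real) \<partial>Mk) = GK Mk m T k u"
        unfolding GK_def by (subst prob_as_integral) auto
    qed
    finally show ?thesis .
  qed
  finally have E: "integral\<^sup>L Mk (\<lambda>\<omega>. real (kingman_state m T u \<omega>)) = 1 + (\<Sum>k=1..<m. GK Mk m T k u)" .
  have P: "measure Mk {\<omega>\<in>space Mk. kingman_state m T u \<omega> = 1} = 1 - GK Mk m T 1 u"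
  proof -
    have VV1[measurable]: "VV m T 1 \<in> borel_measurable Mk" by (intro VVm) simp
    have "measure Mk {\<omega>\<in>space Mk. kingman_state m T u \<omega> = 1} = measure Mk (space Mk - {\<omega>\<in>space Mk. u < VV m T 1 \<omega>})"
    proof (rule finite_measure_eq_AE)
      show "AE \<omega> in Mk. (\<omega> \<in> {\<omega>\<in>space Mk. kingman_state m T u \<omega> = 1}) = (\<omega> \<in> space Mk - {\<omega>\<in>space Mk. u < VV m T 1 \<omega>})"
        using T_AE by eventually_elim (use KS_char(2)[OF u] in auto)
    qed measurable
    also have "\<dots> = 1 - GK Mk m T 1 u" unfolding GK_def by (rule prob_compl) measurable
    finally show ?thesis .
  qed
  show ?thesis unfolding E P HH_closed[OF u] by simp
qed


lemma kingman_integral: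
  assumes t: "0 \<le> t"
  shows "(LBINT u=0..t. integral\<^sup>L Mk (\<lambda>\<omega>. real (kingman_state m T u \<omega>))
                - measure Mk {\<omega>\<in>space Mk. kingman_state m T u \<omega> = 1})
         = (\<Sum>k=2..m. (1 + (-1) ^ k) * (1 - exp (- real (k choose 2) * t))
                 * (2 * real k - 1) / real (k choose 2)
                 * (Gamma (real m + 1) / Gamma (real m - real k + 1))
                 / (Gamma (real m + real k) / Gamma (real m)))"
proof -
  have "(LBINT u=0..t. integral\<^sup>L Mk (\<lambda>\<omega>. real (kingman_state m T u \<omega>))
                - measure Mk {\<omega>\<in>space Mk. kingman_state m T u \<omega> = 1}) = (LBINT u=0..t. HH m m u)"
  proof (rule interval_integral_cong)
    fix x assume "x \<in> einterval (min 0 (ereal t)) (max 0 (ereal t))"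
    then have "0 \<le> x" using t by (auto simp: einterval_def zero_ereal_def)
    then show "integral\<^sup>L Mk (\<lambda>\<omega>. real (kingman_state m T x \<omega>))
                - measure Mk {\<omega>\<in>space Mk. kingman_state m T x \<omega> = 1} = HH m m x"
      by (rule KS_expect)
  qed
  also have "\<dots> = (\<Sum>j=2..m. cc j (real m) * (1 - exp (- lam j * t)) / lam j)"
    by (rule HH_integral[OF t])
  also have "\<dots> = (\<Sum>k=2..m. (1 + (-1) ^ k) * (1 - exp (- real (k choose 2) * t))
                 * (2 * real k - 1) / real (k choose 2)
                 * (Gamma (real m + 1) / Gamma (real m - real k + 1))
                 / (Gamma (real m + real k) / Gamma (real m)))"
  proof (intro sum.cong refl)
    fix k assume k: "k \<in> {2..m}"
    have g: "Gamma (real m + 1) / Gamma (real m - real k + 1) / (Gamma (real m + real k) / Gamma (real m)) = rr k (real m)"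
      using k m2 by (intro Gamma_ratio) auto
    show "cc k (real m) * (1 - exp (- lam k * t)) / lam k = (1 + (-1) ^ k) * (1 - exp (- real (k choose 2) * t))
                 * (2 * real k - 1) / real (k choose 2)
                 * (Gamma (real m + 1) / Gamma (real m - real k + 1))
                 / (Gamma (real m + real k) / Gamma (real m))"
      unfolding cc_def lam_def
      using g by (simp add: divide_inverse mult_ac)
  qed
  finally show ?thesis .
qed

end




lemma q_tendsto:
  fixes u :: real
  shows "(\<lambda>n. real (nat \<lfloor>real (Suc n) * u\<rfloor>) / real (Suc n)) \<longlonglongrightarrow> max 0 u"
proof (cases "u \<le> 0")
  case True
  have "real (nat \<lfloor>real (Suc n) * u\<rfloor>) / real (Suc n) = 0" for n
  proof -
    have "real (Suc n) * u \<le> 0" using True by (simp add: mult_nonneg_nonpos)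
    then have "\<lfloor>real (Suc n) * u\<rfloor> \<le> 0" by linarith
    then show ?thesis by simp
  qed
  then show ?thesis using True by simp
next
  case False
  then have u: "0 < u" by simp
  let ?q = "\<lambda>n. real (nat \<lfloor>real (Suc n) * u\<rfloor>) / real (Suc n)"
  have b: "u - 1 / real (Suc n) \<le> ?q n \<and> ?q n \<le> u" for n
  proof -
    have nn: "0 \<le> \<lfloor>real (Suc n) * u\<rfloor>" using u by simp
    then have e: "real (nat \<lfloor>real (Suc n) * u\<rfloor>) = real_of_int \<lfloor>real (Suc n) * u\<rfloor>" by simp
    have f1: "real_of_int \<lfloor>real (Suc n) * u\<rfloor> \<le> real (Suc n) * u" by linarith
    have f2: "real (Suc n) * u - 1 \<le> real_of_int \<lfloor>real (Suc n) * u\<rfloor>" by linarith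
    have pos: "0 < real (Suc n)" by simp
    obtain F N where F: "F = real_of_int \<lfloor>real (Suc n) * u\<rfloor>" and N: "N = real (Suc n)" by blast
    have f1': "F \<le> N * u" and f2': "N * u - 1 \<le> F" and pos': "0 < N" using f1 f2 F N by auto
    have "F / N \<le> u" using f1' pos' by (simp add: pos_divide_le_eq mult.commute)
    moreover have "u - 1 / N \<le> F / N"
    proof -
      have "u - 1 / N = (N * u - 1) / N" using pos' by (simp add: field_simps)
      also have "\<dots> \<le> F / N" using f2' pos' by (intro divide_right_mono) auto
      finally show ?thesis .
    qed
    ultimately show ?thesis unfolding e F N by simp
  qed
  have l1: "(\<lambda>n. u - 1 / real (Suc n)) \<longlonglongrightarrow> u"
    using tendsto_diff[OF tendsto_const LIMSEQ_Suc[OF lim_1_over_n]] by simp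
  have "?q \<longlonglongrightarrow> u"
    by (rule tendsto_sandwich[OF _ _ l1 tendsto_const]) (use b in auto)
  then show ?thesis using u by simp
qed

lemma joint_meas:
  fixes X :: "real \<Rightarrow> 'a \<Rightarrow> real" and M :: "'a measure"
  assumes meas: "\<And>t. 0 \<le> t \<Longrightarrow> X t \<in> borel_measurable M"
    and cont: "\<And>\<omega>. \<omega> \<in> space M \<Longrightarrow> continuous_on {0..} (\<lambda>t. X t \<omega>)"
  shows "(\<lambda>p. X (max 0 (snd p)) (fst p)) \<in> borel_measurable (M \<Otimes>\<^sub>M lborel)"
proof (rule borel_measurable_LIMSEQ_real)
  let ?q = "\<lambda>n u. real (nat \<lfloor>real (Suc n) * u\<rfloor>) / real (Suc n)"
  fix n
  show "(\<lambda>p. X (?q n (snd p)) (fst p)) \<in> borel_measurable (M \<Otimes>\<^sub>M lborel)"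
  proof (rule measurable_compose_countable'[where I=UNIV and f="\<lambda>i p. X (real i / real (Suc n)) (fst p)"
        and g="\<lambda>p. nat \<lfloor>real (Suc n) * snd p\<rfloor>"])
    fix i :: nat
    show "(\<lambda>p. X (real i / real (Suc n)) (fst p)) \<in> borel_measurable (M \<Otimes>\<^sub>M lborel)"
      using meas[of "real i / real (Suc n)"] by (intro measurable_compose[OF measurable_fst]) auto
  next
    have "(\<lambda>p. \<lfloor>real (Suc n) * snd p\<rfloor>) \<in> (M \<Otimes>\<^sub>M lborel) \<rightarrow>\<^sub>M count_space UNIV"
      by (rule measurable_compose[OF _ measurable_real_floor]) measurable
    then show "(\<lambda>p. nat \<lfloor>real (Suc n) * snd p\<rfloor>) \<in> (M \<Otimes>\<^sub>M lborel) \<rightarrow>\<^sub>M count_space UNIV"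
      by (rule measurable_compose) simp
  qed simp
next
  let ?q = "\<lambda>n u. real (nat \<lfloor>real (Suc n) * u\<rfloor>) / real (Suc n)"
  fix p :: "'a \<times> real" assume p: "p \<in> space (M \<Otimes>\<^sub>M lborel)"
  then have "fst p \<in> space M" by (auto simp: space_pair_measure)
  then have c: "continuous_on {0..} (\<lambda>t. X t (fst p))" by (rule cont)
  show "(\<lambda>n. X (?q n (snd p)) (fst p)) \<longlonglongrightarrow> X (max 0 (snd p)) (fst p)"
    by (rule continuous_on_tendsto_compose[OF c q_tendsto]) auto
qed


lemma lbint_bound:
  fixes g :: "real \<Rightarrow> real" and t :: real
  assumes gm: "g \<in> borel_measurable borel" and gb: "\<And>v. \<bar>g v\<bar> \<le> B" and t: "0 \<le> t"
  shows "\<bar>LBINT v=0..t. g v\<bar> \<le> B * t"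
proof -
  have e: "(LBINT v=0..t. g v) = integral {0..t} g" and i: "g integrable_on {0..t}"
    using lbint_eq_integral[OF t gm, of B] gb by auto
  have "norm (integral {0..t} g) \<le> integral {0..t} (\<lambda>_. B)"
    using gb by (intro integral_norm_bound_integral[OF i]) auto
  then show ?thesis using e t by (simp add: mult.commute)
qed

locale wf_kingman = kingman Mk T m
  for Mk :: "'b measure" and T and m +
  fixes M :: "'a measure" and X :: "real \<Rightarrow> 'a \<Rightarrow> real" and x :: real
  assumes WF: "is_neutral_WF M X x"
begin

lemma P: "prob_space M" using WF by (simp add: is_neutral_WF_def)

lemma Xm: "0 \<le> t \<Longrightarrow> X t \<in> borel_measurable M" using WF by (simp add: is_neutral_WF_def)

lemma X0: "\<omega> \<in> space M \<Longrightarrow> X 0 \<omega> = x" using WF by (simp add: is_neutral_WF_def)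

lemma Xc: "\<omega> \<in> space M \<Longrightarrow> continuous_on {0..} (\<lambda>t. X t \<omega>)" using WF by (simp add: is_neutral_WF_def)

lemma Xr: "\<omega> \<in> space M \<Longrightarrow> 0 \<le> t \<Longrightarrow> X t \<omega> \<in> {0..1}" using WF by (simp add: is_neutral_WF_def)

lemma x01: "x \<in> {0..1}"
proof -
  obtain \<omega> where "\<omega> \<in> space M" using prob_space.not_empty[OF P] by blast
  then show ?thesis using X0 Xr[of \<omega> 0] by auto
qed

definition Y :: "'a \<times> real \<Rightarrow> real" where "Y p = X (max 0 (snd p)) (fst p)"

lemma Ym[measurable]: "Y \<in> borel_measurable (M \<Otimes>\<^sub>M lborel)"
  unfolding Y_def by (rule joint_meas[OF Xm Xc])

lemma Yr: "\<omega> \<in> space M \<Longrightarrow> Y (\<omega>, u) \<in> {0..1}" unfolding Y_def by (intro Xr) auto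

lemma WF_mart:
  fixes f f' f'' :: "real \<Rightarrow> real" and s C :: real
  assumes d1: "\<And>y. (f has_real_derivative f' y) (at y)"
    and d2: "\<And>y. (f' has_real_derivative f'' y) (at y)"
    and c2: "continuous_on UNIV f''"
    and s: "0 \<le> s"
    and bf: "\<And>y. y \<in> {0..1} \<Longrightarrow> \<bar>f y\<bar> \<le> C"
    and bh: "\<And>y. y \<in> {0..1} \<Longrightarrow> \<bar>y * (1 - y) / 2 * f'' y\<bar> \<le> C"
  shows "(\<integral>\<omega>. f (X s \<omega>) \<partial>M) = f x + (LBINT u=0..s. \<integral>\<omega>. Y (\<omega>, u) * (1 - Y (\<omega>, u)) / 2 * f'' (Y (\<omega>, u)) \<partial>M)"
proof -
  interpret P: prob_space M by (rule P)
  let ?h = "\<lambda>y. y * (1 - y) / 2 * f'' y"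
  have fc: "continuous_on UNIV f"
    using d1 by (metis DERIV_isCont continuous_at_imp_continuous_on)
  have fm[measurable]: "f \<in> borel_measurable borel" using fc by (rule borel_measurable_continuous_onI)
  have hm[measurable]: "?h \<in> borel_measurable borel"
    using c2 by (intro borel_measurable_continuous_onI) (intro continuous_intros, auto)
  have Fm: "(\<lambda>p. ?h (Y p)) \<in> borel_measurable (M \<Otimes>\<^sub>M lborel)" by measurable
  have Fb: "\<And>\<omega> v. \<omega> \<in> space M \<Longrightarrow> \<bar>?h (Y (\<omega>, v))\<bar> \<le> C" using bh Yr by blast
  have sp: "space M \<in> natural_events M X 0"
  proof -
    have "space M - {} \<in> natural_events M X 0"
      unfolding natural_events_def by (intro sigma_sets.Compl sigma_sets.Empty)
    then show ?thesis by simp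
  qed
  have MG: "integral\<^sup>L M (\<lambda>\<omega>. indicator (space M) \<omega> *
               (f (X s \<omega>) - f (X 0 \<omega>) -
                (LBINT u=ereal 0..ereal s. X u \<omega> * (1 - X u \<omega>) / 2 * f'' (X u \<omega>)))) = 0"
    using WF d1 d2 c2 s sp unfolding is_neutral_WF_def by blast
  have lb: "(LBINT u=ereal 0..ereal s. X u \<omega> * (1 - X u \<omega>) / 2 * f'' (X u \<omega>)) = (LBINT u=0..s. ?h (Y (\<omega>, u)))" for \<omega>
    unfolding zero_ereal_def
  proof (rule interval_integral_cong)
    fix u assume "u \<in> einterval (min (ereal 0) (ereal s)) (max (ereal 0) (ereal s))"
    then have "0 \<le> u" using s by (auto simp: einterval_def)
    then show "X u \<omega> * (1 - X u \<omega>) / 2 * f'' (X u \<omega>) = ?h (Y (\<omega>, u))" by (simp add: Y_def)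
  qed
  have Im: "(\<lambda>\<omega>. LBINT u=0..s. ?h (Y (\<omega>, u))) \<in> borel_measurable M"
    using fubini_box(2)[OF P Fm Fb s] by simp
  have Ib: "\<bar>LBINT u=0..s. ?h (Y (\<omega>, u))\<bar> \<le> C * s" if "\<omega> \<in> space M" for \<omega>
  proof (rule lbint_bound[OF _ _ s])
    show "(\<lambda>v. ?h (Y (\<omega>, v))) \<in> borel_measurable borel"
      using measurable_Pair2[OF Fm that] by simp
    show "\<bar>?h (Y (\<omega>, v))\<bar> \<le> C" for v using Fb that by blast
  qed
  have i1: "integrable M (\<lambda>\<omega>. f (X s \<omega>))"
  proof (rule P.integrable_const_bound[where B=C])
    have [measurable]: "X s \<in> borel_measurable M" using Xm s by blast
    show "(\<lambda>\<omega>. f (X s \<omega>)) \<in> borel_measurable M" by measurable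
    show "AE \<omega> in M. norm (f (X s \<omega>)) \<le> C" using bf Xr s by (intro AE_I2) auto
  qed
  have i2: "integrable M (\<lambda>\<omega>. LBINT u=0..s. ?h (Y (\<omega>, u)))"
  proof (rule P.integrable_const_bound[where B="C * s"])
    show "AE \<omega> in M. norm (LBINT u=0..s. ?h (Y (\<omega>, u))) \<le> C * s"
      using Ib by (intro AE_I2) (simp only: real_norm_def)
  qed (rule Im)
  have "integral\<^sup>L M (\<lambda>\<omega>. indicator (space M) \<omega> *
               (f (X s \<omega>) - f (X 0 \<omega>) -
                (LBINT u=ereal 0..ereal s. X u \<omega> * (1 - X u \<omega>) / 2 * f'' (X u \<omega>))))
      = (\<integral>\<omega>. f (X s \<omega>) - f x - (LBINT u=0..s. ?h (Y (\<omega>, u))) \<partial>M)"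
    unfolding lb by (intro Bochner_Integration.integral_cong refl) (simp add: X0)
  then have "0 = (\<integral>\<omega>. f (X s \<omega>) - f x - (LBINT u=0..s. ?h (Y (\<omega>, u))) \<partial>M)"
    using MG by simp
  also have "\<dots> = (\<integral>\<omega>. f (X s \<omega>) \<partial>M) - f x - (\<integral>\<omega>. (LBINT u=0..s. ?h (Y (\<omega>, u))) \<partial>M)"
    using i1 i2 by (simp add: P.prob_space)
  also have "(\<integral>\<omega>. (LBINT u=0..s. ?h (Y (\<omega>, u))) \<partial>M) = (LBINT u=0..s. \<integral>\<omega>. ?h (Y (\<omega>, u)) \<partial>M)"
    using fubini_box(1)[OF P Fm Fb s] by simp
  finally show ?thesis by simp
qed


definition mom :: "real \<Rightarrow> real \<Rightarrow> nat \<Rightarrow> real \<Rightarrow> real" where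
  "mom a c k u = (\<integral>\<omega>. (a + c * Y (\<omega>, u)) ^ k \<partial>M)"

lemma ac_facts:
  fixes a c y :: real
  assumes ac: "(a = 0 \<and> c = 1) \<or> (a = 1 \<and> c = -1)" and y: "y \<in> {0..1}"
  shows "0 \<le> a + c * y" "a + c * y \<le> 1" "\<bar>(a + c * y) ^ k\<bar> \<le> 1"
proof -
  show 1: "0 \<le> a + c * y" using ac y by auto
  show 2: "a + c * y \<le> 1" using ac y by auto
  show "\<bar>(a + c * y) ^ k\<bar> \<le> 1" using 1 2 by (simp add: power_le_one)
qed

lemma ac_ident:
  fixes a c y :: real
  assumes ac: "(a = 0 \<and> c = 1) \<or> (a = 1 \<and> c = -1)"
  shows "y * (1 - y) / 2 * (real k * real (k - 1) * (a + c * y) ^ (k - 2) * c * c)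
         = lam k * ((a + c * y) ^ (k - 1) - (a + c * y) ^ k)"
proof (cases "k < 2")
  case True
  then have "k = 0 \<or> k = 1" by auto
  then show ?thesis by (auto simp: lam_def)
next
  case False
  then obtain j where k: "k = j + 2" by (metis add.commute le_add_diff_inverse not_less)
  define z where "z = a + c * y"
  have cc: "c * c = 1" using ac by auto
  have zz: "z * (1 - z) = y * (1 - y)" using ac unfolding z_def by (auto simp: algebra_simps)
  have "lam k * (z ^ (k - 1) - z ^ k) = (real (j + 2) * real (j + 1) / 2) * (z ^ j * (z * (1 - z)))"
    unfolding k by (simp add: lam_eq algebra_simps)
  also have "\<dots> = y * (1 - y) / 2 * (real (j + 2) * real (j + 1) * z ^ j)"
    unfolding zz by (simp add: field_simps)
  also have "real (j + 2) * real (j + 1) * z ^ j = real k * real (k - 1) * z ^ (k - 2) * c * c"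
    using cc unfolding k by (simp add: mult.assoc)
  finally show ?thesis unfolding z_def by simp
qed

lemma Y_meas_u[measurable]: "(\<lambda>\<omega>. Y (\<omega>, u)) \<in> borel_measurable M"
  unfolding Y_def using Xm[of "max 0 u"] by simp

lemma mom_integrable:
  assumes ac: "(a = 0 \<and> c = 1) \<or> (a = 1 \<and> c = -1)"
  shows "integrable M (\<lambda>\<omega>. (a + c * Y (\<omega>, u)) ^ k)"
proof -
  interpret P: prob_space M by (rule P)
  show ?thesis
    using ac_facts(3)[OF ac Yr] by (intro P.integrable_const_bound[where B=1]) (auto intro!: AE_I2)
qed

lemma mom_bound:
  assumes ac: "(a = 0 \<and> c = 1) \<or> (a = 1 \<and> c = -1)"
  shows "\<bar>mom a c k u\<bar> \<le> 1"
proof -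
  interpret P: prob_space M by (rule P)
  have "\<bar>mom a c k u\<bar> \<le> (\<integral>\<omega>. \<bar>(a + c * Y (\<omega>, u)) ^ k\<bar> \<partial>M)"
    unfolding mom_def by (rule integral_abs_bound)
  also have "\<dots> \<le> (\<integral>\<omega>. 1 \<partial>M)"
    by (rule integral_mono) (use ac_facts(3)[OF ac Yr] mom_integrable[OF ac] in auto)
  finally have "\<bar>mom a c k u\<bar> \<le> (\<integral>\<omega>. 1 \<partial>M)" .
  then show ?thesis by (simp add: P.prob_space)
qed

lemma mom_meas:
  assumes ac: "(a = 0 \<and> c = 1) \<or> (a = 1 \<and> c = -1)"
  shows "mom a c k \<in> borel_measurable borel"
proof -
  have fm: "(\<lambda>p. (a + c * Y p) ^ k) \<in> borel_measurable (M \<Otimes>\<^sub>M lborel)" by measurable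
  have "(\<lambda>v. \<integral>\<omega>. (a + c * Y (\<omega>, v)) ^ k \<partial>M) \<in> borel_measurable borel"
    using fubini_box(3)[OF P fm, of 1 0] ac_facts(3)[OF ac Yr] by auto
  then show ?thesis unfolding mom_def[abs_def] .
qed

lemma mom_0:
  shows "mom a c k 0 = (a + c * x) ^ k"
proof -
  interpret P: prob_space M by (rule P)
  have "mom a c k 0 = (\<integral>\<omega>. (a + c * x) ^ k \<partial>M)"
    unfolding mom_def by (intro Bochner_Integration.integral_cong refl) (simp add: Y_def X0)
  then show ?thesis by (simp add: P.prob_space)
qed

lemma mom_zero: "mom a c 0 u = 1"
proof -
  interpret P: prob_space M by (rule P)
  show ?thesis unfolding mom_def by (simp add: P.prob_space)
qed

lemma mom_eq:
  assumes ac: "(a = 0 \<and> c = 1) \<or> (a = 1 \<and> c = -1)" and s: "0 \<le> s"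
  shows "mom a c k s = (a + c * x) ^ k + (LBINT u=0..s. lam k * (mom a c (k - 1) u - mom a c k u))"
proof -
  interpret P: prob_space M by (rule P)
  let ?f = "\<lambda>y. (a + c * y) ^ k"
  let ?f1 = "\<lambda>y. real k * (a + c * y) ^ (k - 1) * c"
  let ?f2 = "\<lambda>y. real k * real (k - 1) * (a + c * y) ^ (k - 2) * c * c"
  have d1: "(?f has_real_derivative ?f1 y) (at y)" for y
    by (auto intro!: derivative_eq_intros)
  have d2: "(?f1 has_real_derivative ?f2 y) (at y)" for y
    by (auto intro!: derivative_eq_intros simp: algebra_simps numeral_2_eq_2)
  have c2: "continuous_on UNIV ?f2" by (intro continuous_intros)
  have bf: "\<bar>?f y\<bar> \<le> 1 + lam k" if "y \<in> {0..1}" for y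
    using ac_facts(3)[OF ac that, of k] lam_def by (smt (verit) of_nat_0_le_iff)
  have bh: "\<bar>y * (1 - y) / 2 * ?f2 y\<bar> \<le> 1 + lam k" if "y \<in> {0..1}" for y
  proof -
    have l0: "0 \<le> lam k" by (simp add: lam_def)
    have "\<bar>(a + c * y) ^ (k - 1) - (a + c * y) ^ k\<bar> \<le> 1"
      using ac_facts[OF ac that] by (smt (verit) power_le_one zero_le_power)
    then have "\<bar>lam k * ((a + c * y) ^ (k - 1) - (a + c * y) ^ k)\<bar> \<le> lam k"
      using l0 by (simp add: abs_mult mult_left_le)
    then show ?thesis unfolding ac_ident[OF ac] by simp
  qed
  have "(\<integral>\<omega>. ?f (X s \<omega>) \<partial>M) = ?f x + (LBINT u=0..s. \<integral>\<omega>. Y (\<omega>, u) * (1 - Y (\<omega>, u)) / 2 * ?f2 (Y (\<omega>, u)) \<partial>M)"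
    by (rule WF_mart[OF d1 d2 c2 s bf bh])
  moreover have "(\<integral>\<omega>. ?f (X s \<omega>) \<partial>M) = mom a c k s"
    unfolding mom_def using s by (simp add: Y_def)
  moreover have "(\<integral>\<omega>. Y (\<omega>, u) * (1 - Y (\<omega>, u)) / 2 * ?f2 (Y (\<omega>, u)) \<partial>M) = lam k * (mom a c (k - 1) u - mom a c k u)" for u
  proof -
    have "(\<integral>\<omega>. Y (\<omega>, u) * (1 - Y (\<omega>, u)) / 2 * ?f2 (Y (\<omega>, u)) \<partial>M)
        = (\<integral>\<omega>. lam k * ((a + c * Y (\<omega>, u)) ^ (k - 1) - (a + c * Y (\<omega>, u)) ^ k) \<partial>M)"
      unfolding ac_ident[OF ac] ..
    also have "\<dots> = lam k * ((\<integral>\<omega>. (a + c * Y (\<omega>, u)) ^ (k - 1) \<partial>M) - (\<integral>\<omega>. (a + c * Y (\<omega>, u)) ^ k \<partial>M))"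
      using mom_integrable[OF ac] by simp
    finally show ?thesis unfolding mom_def .
  qed
  ultimately show ?thesis by simp
qed


lemma mom_ie:
  assumes ac: "(a = 0 \<and> c = 1) \<or> (a = 1 \<and> c = -1)" and s: "0 \<le> s"
  shows "mom a c k s = mom a c k 0 + integral {0..s} (\<lambda>u. lam k * (mom a c (k - 1) u - mom a c k u))"
    "(\<lambda>u. lam k * (mom a c (k - 1) u - mom a c k u)) integrable_on {0..s}"
proof -
  let ?g = "\<lambda>u. lam k * (mom a c (k - 1) u - mom a c k u)"
  have gm: "?g \<in> borel_measurable borel"
    using mom_meas[OF ac] by (intro borel_measurable_times borel_measurable_diff borel_measurable_const) auto
  have gb: "\<bar>?g u\<bar> \<le> lam k * 2" for u
  proof -
    have "\<bar>mom a c (k - 1) u - mom a c k u\<bar> \<le> 2" using mom_bound[OF ac, of "k-1" u] mom_bound[OF ac, of k u] by linarith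
    moreover have "0 \<le> lam k" by (simp add: lam_def)
    ultimately show ?thesis by (simp add: abs_mult mult_left_mono)
  qed
  have L: "(LBINT u=0..s. ?g u) = integral {0..s} ?g" "?g integrable_on {0..s}"
    using lbint_eq_integral[OF s gm gb] by auto
  show "mom a c k s = mom a c k 0 + integral {0..s} ?g"
    using mom_eq[OF ac s, of k] L(1) mom_0 by simp
  show "?g integrable_on {0..s}" by (rule L(2))
qed

lemma mom_cont:
  assumes ac: "(a = 0 \<and> c = 1) \<or> (a = 1 \<and> c = -1)" and t: "0 \<le> t"
  shows "continuous_on {0..t} (mom a c k)"
proof (rule ie_cont)
  fix s assume "s \<in> {0..t}"
  then show "mom a c k s = mom a c k 0 + integral {0..s} (\<lambda>u. lam k * (mom a c (k - 1) u - mom a c k u))"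
    by (intro mom_ie(1)[OF ac]) auto
qed (rule mom_ie(2)[OF ac t])

lemma mom_deriv:
  assumes ac: "(a = 0 \<and> c = 1) \<or> (a = 1 \<and> c = -1)" and t: "0 \<le> t" and u: "u \<in> {0..t}"
  shows "(mom a c k has_real_derivative (lam k * (mom a c (k - 1) u - mom a c k u))) (at u within {0..t})"
proof (rule ie_deriv[OF _ _ u])
  fix s assume "s \<in> {0..t}"
  then show "mom a c k s = mom a c k 0 + integral {0..s} (\<lambda>u. lam k * (mom a c (k - 1) u - mom a c k u))"
    by (intro mom_ie(1)[OF ac]) auto
next
  show "continuous_on {0..t} (\<lambda>u. lam k * (mom a c (k - 1) u - mom a c k u))"
    using mom_cont[OF ac t, of "k-1"] mom_cont[OF ac t, of k] by (intro continuous_intros)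
qed

lemma mom_closed:
  assumes ac: "(a = 0 \<and> c = 1) \<or> (a = 1 \<and> c = -1)" and s: "0 \<le> s"
  shows "mom a c m s = (a + c * x) + (\<Sum>k=1..<m. GK Mk m T k s * ((a + c * x) ^ Suc k - (a + c * x) ^ k))"
proof -
  have "mom a c m s = mom a c 1 0 + (\<Sum>k=1..<m. GK Mk m T k s * (mom a c (Suc k) 0 - mom a c k 0))"
  proof (rule duality[OF s])
    show "1 \<le> m" using m2 by simp
    show "\<forall>u\<in>{0..s}. GK Mk m T m u = 0" using GK_m by auto
    show "\<forall>k\<in>{1..<m}. GK Mk m T k 0 = 1" using GK_0 by auto
    show "\<forall>k\<in>{1..<m}. \<forall>u\<in>{0..s}. (GK Mk m T k has_real_derivative (- lam (Suc k) * (GK Mk m T k u - GK Mk m T (Suc k) u))) (at u within {0..s})"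
      using GK_deriv[OF _ s] by auto
    show "\<forall>k\<in>{1..m}. \<forall>u\<in>{0..s}. (mom a c k has_real_derivative (lam k * (mom a c (k-1) u - mom a c k u))) (at u within {0..s})"
      using mom_deriv[OF ac s] by auto
  qed
  then show ?thesis by (simp add: mom_0)
qed


lemma WF_main:
  assumes t: "0 \<le> t"
  shows "(\<integral>\<omega>. (LBINT u=0..t. 1 - X u \<omega> ^ m - (1 - X u \<omega>) ^ m) \<partial>M)
       = (\<Sum>k=1..<m. (x ^ k * (1 - x) + x * (1 - x) ^ k) * integral {0..t} (GK Mk m T k))"
proof -
  interpret P: prob_space M by (rule P)
  define g where "g y = 1 - y ^ m - (1 - y) ^ m" for y :: real
  define w where "w k = x ^ k * (1 - x) + x * (1 - x) ^ k" for k
  have ac1: "(0::real) = 0 \<and> (1::real) = 1 \<or> (0::real) = 1 \<and> (1::real) = -1" by simp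
  have ac2: "(1::real) = 0 \<and> (-1::real) = 1 \<or> (1::real) = 1 \<and> (-1::real) = -1" by simp
  have gm: "(\<lambda>p. g (Y p)) \<in> borel_measurable (M \<Otimes>\<^sub>M lborel)" unfolding g_def by measurable
  have gb: "\<bar>g (Y (\<omega>, v))\<bar> \<le> 3" if "\<omega> \<in> space M" for \<omega> v
  proof -
    have y: "Y (\<omega>, v) \<in> {0..1}" using Yr that by blast
    then have "\<bar>Y (\<omega>, v) ^ m\<bar> \<le> 1" "\<bar>(1 - Y (\<omega>, v)) ^ m\<bar> \<le> 1"
      using ac_facts(3)[OF ac1 y, of m] ac_facts(3)[OF ac2 y, of m] by auto
    then show ?thesis unfolding g_def by linarith
  qed
  have s1: "(\<integral>\<omega>. (LBINT u=0..t. 1 - X u \<omega> ^ m - (1 - X u \<omega>) ^ m) \<partial>M)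
        = (\<integral>\<omega>. (LBINT u=0..t. g (Y (\<omega>, u))) \<partial>M)"
  proof (intro Bochner_Integration.integral_cong refl interval_integral_cong)
    fix \<omega> u assume "u \<in> einterval (min 0 (ereal t)) (max 0 (ereal t))"
    then have "0 \<le> u" using t by (auto simp: einterval_def zero_ereal_def)
    then show "1 - X u \<omega> ^ m - (1 - X u \<omega>) ^ m = g (Y (\<omega>, u))" by (simp add: g_def Y_def)
  qed
  also have "\<dots> = (LBINT u=0..t. \<integral>\<omega>. g (Y (\<omega>, u)) \<partial>M)"
    using fubini_box(1)[OF P gm gb t] by simp
  also have "\<dots> = (LBINT u=0..t. (\<Sum>k=1..<m. GK Mk m T k u * w k))"
  proof (rule interval_integral_cong)
    fix u assume "u \<in> einterval (min 0 (ereal t)) (max 0 (ereal t))"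
    then have u: "0 \<le> u" using t by (auto simp: einterval_def zero_ereal_def)
    have i1: "integrable M (\<lambda>\<omega>. Y (\<omega>, u) ^ m)" using mom_integrable[OF ac1, of u m] by simp
    have i2: "integrable M (\<lambda>\<omega>. (1 - Y (\<omega>, u)) ^ m)" using mom_integrable[OF ac2, of u m] by simp
    have "(\<integral>\<omega>. g (Y (\<omega>, u)) \<partial>M) = 1 - (\<integral>\<omega>. Y (\<omega>, u) ^ m \<partial>M) - (\<integral>\<omega>. (1 - Y (\<omega>, u)) ^ m \<partial>M)"
      unfolding g_def using i1 i2 by (simp add: P.prob_space)
    also have "\<dots> = 1 - mom 0 1 m u - mom 1 (-1) m u" by (simp add: mom_def)
    also have "\<dots> = 1 - (x + (\<Sum>k=1..<m. GK Mk m T k u * (x ^ Suc k - x ^ k)))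
                     - ((1 - x) + (\<Sum>k=1..<m. GK Mk m T k u * ((1 - x) ^ Suc k - (1 - x) ^ k)))"
      using mom_closed[OF ac1 u] mom_closed[OF ac2 u] by simp
    also have "\<dots> = (\<Sum>k=1..<m. GK Mk m T k u * w k)"
    proof -
      have "GK Mk m T k u * w k = - (GK Mk m T k u * (x ^ Suc k - x ^ k)) - GK Mk m T k u * ((1 - x) ^ Suc k - (1 - x) ^ k)" for k
        unfolding w_def by (simp add: algebra_simps)
      then have "(\<Sum>k=1..<m. GK Mk m T k u * w k) = - (\<Sum>k=1..<m. GK Mk m T k u * (x ^ Suc k - x ^ k)) - (\<Sum>k=1..<m. GK Mk m T k u * ((1 - x) ^ Suc k - (1 - x) ^ k))"
        by (simp add: sum_subtractf sum_negf)
      then show ?thesis by simp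
    qed
    finally show "(\<integral>\<omega>. g (Y (\<omega>, u)) \<partial>M) = (\<Sum>k=1..<m. GK Mk m T k u * w k)" .
  qed
  also have "\<dots> = integral {0..t} (\<lambda>u. \<Sum>k=1..<m. GK Mk m T k u * w k)"
  proof (rule lbint_eq_integral(1)[OF t])
    show "(\<lambda>u. \<Sum>k=1..<m. GK Mk m T k u * w k) \<in> borel_measurable borel"
      using GK_meas by (intro borel_measurable_sum borel_measurable_times borel_measurable_const) auto
    show "\<bar>\<Sum>k=1..<m. GK Mk m T k u * w k\<bar> \<le> (\<Sum>k=1..<m. \<bar>w k\<bar>)" for u
    proof -
      have "\<bar>\<Sum>k=1..<m. GK Mk m T k u * w k\<bar> \<le> (\<Sum>k=1..<m. \<bar>GK Mk m T k u * w k\<bar>)" by (rule sum_abs)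
      also have "\<dots> \<le> (\<Sum>k=1..<m. \<bar>w k\<bar>)"
      proof (rule sum_mono)
        fix k
        have "\<bar>GK Mk m T k u\<bar> \<le> 1" using GK_bounds[of k u] by linarith
        then show "\<bar>GK Mk m T k u * w k\<bar> \<le> \<bar>w k\<bar>" by (simp add: abs_mult mult_left_le_one_le)
      qed
      finally show ?thesis .
    qed
  qed
  also have "\<dots> = (\<Sum>k=1..<m. integral {0..t} (\<lambda>u. GK Mk m T k u * w k))"
  proof (rule integral_sum)
    fix k assume k: "k \<in> {1..<m}"
    have "GK Mk m T k integrable_on {0..t}"
      using lbint_eq_integral(2)[OF t GK_meas, of k 1] k GK_bounds[of k] by (auto simp: abs_le_iff)
    then show "(\<lambda>u. GK Mk m T k u * w k) integrable_on {0..t}" by (rule integrable_on_mult_left)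
  qed simp
  also have "\<dots> = (\<Sum>k=1..<m. w k * integral {0..t} (GK Mk m T k))"
    by (simp add: mult.commute)
  finally show ?thesis unfolding w_def .
qed

end


context kingman
begin

lemma GK_int: "k \<in> {1..m} \<Longrightarrow> 0 \<le> t \<Longrightarrow> GK Mk m T k integrable_on {0..t}"
  using lbint_eq_integral(2)[of t "GK Mk m T k" 1] GK_meas[of k] GK_bounds[of k] by (auto simp: abs_le_iff)

lemma KS_lbint:
  assumes t: "0 \<le> t"
  shows "(LBINT u=0..t. integral\<^sup>L Mk (\<lambda>\<omega>. real (kingman_state m T u \<omega>))
                - measure Mk {\<omega>\<in>space Mk. kingman_state m T u \<omega> = 1})
       = integral {0..t} (GK Mk m T 1) + (\<Sum>k=1..<m. integral {0..t} (GK Mk m T k))"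
proof -
  have "(LBINT u=0..t. integral\<^sup>L Mk (\<lambda>\<omega>. real (kingman_state m T u \<omega>))
                - measure Mk {\<omega>\<in>space Mk. kingman_state m T u \<omega> = 1})
        = (LBINT u=0..t. GK Mk m T 1 u + (\<Sum>k=1..<m. GK Mk m T k u))"
  proof (rule interval_integral_cong)
    fix u assume "u \<in> einterval (min 0 (ereal t)) (max 0 (ereal t))"
    then have u: "0 \<le> u" using t by (auto simp: einterval_def zero_ereal_def)
    show "integral\<^sup>L Mk (\<lambda>\<omega>. real (kingman_state m T u \<omega>))
                - measure Mk {\<omega>\<in>space Mk. kingman_state m T u \<omega> = 1} = GK Mk m T 1 u + (\<Sum>k=1..<m. GK Mk m T k u)"
      using KS_expect[OF u] HH_closed[OF u] by simp
  qed
  also have "\<dots> = integral {0..t} (\<lambda>u. GK Mk m T 1 u + (\<Sum>k=1..<m. GK Mk m T k u))"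
  proof (rule lbint_eq_integral(1)[OF t])
    show "(\<lambda>u. GK Mk m T 1 u + (\<Sum>k=1..<m. GK Mk m T k u)) \<in> borel_measurable borel"
      using GK_meas by (intro borel_measurable_add borel_measurable_sum) auto
    show "\<bar>GK Mk m T 1 u + (\<Sum>k=1..<m. GK Mk m T k u)\<bar> \<le> 1 + real m" for u
    proof -
      have "\<bar>\<Sum>k=1..<m. GK Mk m T k u\<bar> \<le> (\<Sum>k=1..<m. 1)"
        using GK_bounds by (intro order.trans[OF sum_abs] sum_mono) (simp add: abs_le_iff)
      then have "\<bar>\<Sum>k=1..<m. GK Mk m T k u\<bar> \<le> real m" by simp
      moreover have "\<bar>GK Mk m T 1 u\<bar> \<le> 1" using GK_bounds[of 1 u] by linarith
      ultimately show ?thesis by linarith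
    qed
  qed
  also have "\<dots> = integral {0..t} (GK Mk m T 1) + integral {0..t} (\<lambda>u. \<Sum>k=1..<m. GK Mk m T k u)"
    using GK_int[of 1 t] m2 t by (intro integral_add integrable_sum GK_int) auto
  also have "integral {0..t} (\<lambda>u. \<Sum>k=1..<m. GK Mk m T k u) = (\<Sum>k=1..<m. integral {0..t} (GK Mk m T k))"
    using t by (intro integral_sum GK_int) auto
  finally show ?thesis .
qed

end

lemma w_limit:
  assumes k: "1 \<le> k"
  shows "(\<lambda>N. real N * ((1 / real N) ^ k * (1 - 1 / real N) + 1 / real N * (1 - 1 / real N) ^ k))
         \<longlonglongrightarrow> (if k = 1 then 2 else 1)"
proof -
  have h: "(\<lambda>N. 1 / real N) \<longlonglongrightarrow> 0" by (rule lim_1_over_n)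
  have "(\<lambda>N. (1 / real N) ^ (k - 1) * (1 - 1 / real N) + (1 - 1 / real N) ^ k)
         \<longlonglongrightarrow> 0 ^ (k - 1) * (1 - 0) + (1 - 0) ^ k"
    by (intro tendsto_intros h)
  moreover have "0 ^ (k - 1) * (1 - 0) + (1 - 0) ^ k = (if k = 1 then 2 else (1::real))"
    using k by auto
  ultimately have L: "(\<lambda>N. (1 / real N) ^ (k - 1) * (1 - 1 / real N) + (1 - 1 / real N) ^ k)
         \<longlonglongrightarrow> (if k = 1 then 2 else 1)" by simp
  show ?thesis
  proof (rule Lim_transform_eventually[OF L])
    show "\<forall>\<^sub>F N in sequentially. (1 / real N) ^ (k - 1) * (1 - 1 / real N) + (1 - 1 / real N) ^ k
           = real N * ((1 / real N) ^ k * (1 - 1 / real N) + 1 / real N * (1 - 1 / real N) ^ k)"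
    proof (rule eventually_sequentiallyI[of 1])
      fix N :: nat assume N: "1 \<le> N"
      have p: "(1 / real N) ^ k = (1 / real N) ^ (k - 1) * (1 / real N)"
        using k by (metis Suc_diff_le diff_Suc_1 power_Suc2)
      show "(1 / real N) ^ (k - 1) * (1 - 1 / real N) + (1 - 1 / real N) ^ k
           = real N * ((1 / real N) ^ k * (1 - 1 / real N) + 1 / real N * (1 - 1 / real N) ^ k)"
        unfolding p using N by (simp add: field_simps)
    qed
  qed
qed


theorem mainTheorem8:
  fixes \<theta> t :: real and m :: nat
    and M :: "nat \<Rightarrow> 'a measure" and X :: "nat \<Rightarrow> real \<Rightarrow> 'a \<Rightarrow> real"
    and Mk :: "'b measure" and T :: "nat \<Rightarrow> 'b \<Rightarrow> real"
  assumes "\<theta> > 0" and "m \<ge> 2" and "t \<ge> 0"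
    and WF: "\<And>N. N \<ge> 1 \<Longrightarrow> is_neutral_WF (M N) (X N) (1 / real N)"
    and K: "kingman_times Mk T m"
  shows "(\<lambda>N. real N * \<theta> *
            integral\<^sup>L (M N) (\<lambda>\<omega>. LBINT u=0..t. 1 - X N u \<omega> ^ m - (1 - X N u \<omega>) ^ m))
          \<longlonglongrightarrow> \<theta> * (LBINT u=0..t.
                integral\<^sup>L Mk (\<lambda>\<omega>. real (kingman_state m T u \<omega>))
                - measure Mk {\<omega>\<in>space Mk. kingman_state m T u \<omega> = 1})
     \<and> \<theta> * (LBINT u=0..t.
                integral\<^sup>L Mk (\<lambda>\<omega>. real (kingman_state m T u \<omega>))
                - measure Mk {\<omega>\<in>space Mk. kingman_state m T u \<omega> = 1})
         = \<theta> * (\<Sum>k=2..m. (1 + (-1) ^ k) * (1 - exp (- real (k choose 2) * t))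
                 * (2 * real k - 1) / real (k choose 2)
                 * (Gamma (real m + 1) / Gamma (real m - real k + 1))
                 / (Gamma (real m + real k) / Gamma (real m)))"
proof -
  interpret Kg: kingman Mk T m using K \<open>m \<ge> 2\<close> by unfold_locales
  have t: "0 \<le> t" using \<open>t \<ge> 0\<close> .
  define A where "A k = integral {0..t} (GK Mk m T k)" for k
  define w where "w N k = (1 / real N) ^ k * (1 - 1 / real N) + 1 / real N * (1 - 1 / real N) ^ k" for N k
  have E: "integral\<^sup>L (M N) (\<lambda>\<omega>. LBINT u=0..t. 1 - X N u \<omega> ^ m - (1 - X N u \<omega>) ^ m)
           = (\<Sum>k=1..<m. w N k * A k)" if N: "1 \<le> N" for N
  proof -
    interpret W: wf_kingman Mk T m "M N" "X N" "1 / real N"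
      using WF[OF N] by unfold_locales
    show ?thesis using W.WF_main[OF t] by (simp add: A_def w_def)
  qed
  have KS: "(LBINT u=0..t. integral\<^sup>L Mk (\<lambda>\<omega>. real (kingman_state m T u \<omega>))
                - measure Mk {\<omega>\<in>space Mk. kingman_state m T u \<omega> = 1}) = A 1 + (\<Sum>k=1..<m. A k)"
    using Kg.KS_lbint[OF t] by (simp add: A_def)
  have L: "(\<lambda>N. \<theta> * (\<Sum>k=1..<m. (real N * w N k) * A k)) \<longlonglongrightarrow> \<theta> * (\<Sum>k=1..<m. (if k = 1 then 2 else 1) * A k)"
    using w_limit unfolding w_def by (intro tendsto_intros) auto
  have S: "(\<Sum>k=1..<m. (if k = 1 then 2 else 1) * A k) = A 1 + (\<Sum>k=1..<m. A k)"
  proof -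
    have "(\<Sum>k=1..<m. (if k = 1 then 2 else 1) * A k) = (\<Sum>k=1..<m. A k + (if k = 1 then A k else 0))"
      by (intro sum.cong) auto
    also have "\<dots> = (\<Sum>k=1..<m. A k) + (\<Sum>k=1..<m. (if k = 1 then A k else 0))"
      by (rule sum.distrib)
    also have "(\<Sum>k=1..<m. (if k = 1 then A k else 0)) = A 1"
      using \<open>m \<ge> 2\<close> by (simp add: sum.delta)
    finally show ?thesis by simp
  qed
  have conv: "(\<lambda>N. real N * \<theta> *
            integral\<^sup>L (M N) (\<lambda>\<omega>. LBINT u=0..t. 1 - X N u \<omega> ^ m - (1 - X N u \<omega>) ^ m))
          \<longlonglongrightarrow> \<theta> * (A 1 + (\<Sum>k=1..<m. A k))"
  proof (rule Lim_transform_eventually[OF L[unfolded S]])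
    show "\<forall>\<^sub>F N in sequentially. \<theta> * (\<Sum>k=1..<m. (real N * w N k) * A k) = real N * \<theta> *
            integral\<^sup>L (M N) (\<lambda>\<omega>. LBINT u=0..t. 1 - X N u \<omega> ^ m - (1 - X N u \<omega>) ^ m)"
    proof (rule eventually_sequentiallyI[of 1])
      fix N :: nat assume N: "1 \<le> N"
      show "\<theta> * (\<Sum>k=1..<m. (real N * w N k) * A k) = real N * \<theta> *
            integral\<^sup>L (M N) (\<lambda>\<omega>. LBINT u=0..t. 1 - X N u \<omega> ^ m - (1 - X N u \<omega>) ^ m)"
        unfolding E[OF N] by (simp add: sum_distrib_left mult_ac)
    qed
  qed
  show ?thesis
  proof
    show "(\<lambda>N. real N * \<theta> *
            integral\<^sup>L (M N) (\<lambda>\<omega>. LBINT u=0..t. 1 - X N u \<omega> ^ m - (1 - X N u \<omega>) ^ m))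
          \<longlonglongrightarrow> \<theta> * (LBINT u=0..t.
                integral\<^sup>L Mk (\<lambda>\<omega>. real (kingman_state m T u \<omega>))
                - measure Mk {\<omega>\<in>space Mk. kingman_state m T u \<omega> = 1})"
      unfolding KS by (rule conv)
    show "\<theta> * (LBINT u=0..t.
                integral\<^sup>L Mk (\<lambda>\<omega>. real (kingman_state m T u \<omega>))
                - measure Mk {\<omega>\<in>space Mk. kingman_state m T u \<omega> = 1})
         = \<theta> * (\<Sum>k=2..m. (1 + (-1) ^ k) * (1 - exp (- real (k choose 2) * t))
                 * (2 * real k - 1) / real (k choose 2)
                 * (Gamma (real m + 1) / Gamma (real m - real k + 1))
                 / (Gamma (real m + real k) / Gamma (real m)))"
      using Kg.kingman_integral[OF t] by simp
  qed
qed


end
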